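(* Let $\mathcal{M}$ be a matroid with $n$ elements and rank $r\geq 1$, with distinct element weights. Consider the following online algorithm, which uses only comparisons between weights of elements already seen. With probability $1/2$, run the classical secretary algorithm (observe the first $\lfloor n/e\rfloor$ elements, then accept the first element heavier than all observed ones). Otherwise: draw $m\sim\mathrm{Bin}(n,1/2)$, call the first $m$ arriving elements the sample, and compute the maximum-weight independent set $A=\{a_1,\dots,a_k\}$ of the sample with $w(a_1)\geq\dots\geq w(a_k)$; choose $\ell\in\{1,3,9,\dots,3^t\}$ uniformly at random, where $t=\lfloor\log_3 r\rfloor$ if $r$ is known, and otherwise $t$ is chosen uniformly from $\{\lfloor\log_3 k\rfloor,\lfloor\log_3 k\rfloor+1\}$; then run the greedy procedure (accept an element if the accepted set stays independent) on the non-sampled elements, as they arrive, that are heavier than $a_\ell$ (on all non-sampled elements if $\ell>k$). Then, in both versions (rank known or unknown), this algorithm is $O(\log r)$-competitive in the zero information model: there is an absolute constant $c$ such that $c\,(1+\log r)\,\mathbb{E}[w(\mathrm{ALG})]\geq w(\mathrm{OPT})$ for every matroid of rank $r$ and every weight assignment.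
   Context: Zero information model of the matroid secretary problem: an adversary assigns arbitrary nonnegative weights to the elements; the elements are revealed in uniformly random order; the online algorithm irrevocably accepts or rejects each element on arrival, keeping the accepted set independent. $\mathrm{OPT}$ is a maximum-weight independent set of $\mathcal{M}$ and $w(S)=\sum_{e\in S}w(e)$; the expectation is over the random order and the algorithm's randomness. *)

theory Defs
  imports "HOL-Probability.Probability" "HOL-Combinatorics.Multiset_Permutations"
begin

definition matroid :: "'a set \<Rightarrow> ('a set \<Rightarrow> bool) \<Rightarrow> bool" where
  "matroid E indep \<longleftrightarrow>
     finite E \<and> indep {} \<and> (\<forall>I. indep I \<longrightarrow> I \<subseteq> E) \<and>
     (\<forall>I J. indep J \<and> I \<subseteq> J \<longrightarrow> indep I) \<and>
     (\<forall>I J. indep I \<and> indep J \<and> card I < card J \<longrightarrow> (\<exists>x\<in>J - I. indep (insert x I)))"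

definition mrank :: "'a set \<Rightarrow> ('a set \<Rightarrow> bool) \<Rightarrow> nat" where
  "mrank E indep = Max (card ` {I. indep I})"

definition opt_weight :: "'a set \<Rightarrow> ('a set \<Rightarrow> bool) \<Rightarrow> ('a \<Rightarrow> real) \<Rightarrow> real" where
  "opt_weight E indep w = Max ((\<lambda>I. sum w I) ` {I. indep I})"

fun greedy_on :: "('a set \<Rightarrow> bool) \<Rightarrow> 'a set \<Rightarrow> 'a list \<Rightarrow> 'a set" where
  "greedy_on indep S [] = S"
| "greedy_on indep S (x # xs) =
     greedy_on indep (if indep (insert x S) then insert x S else S) xs"

fun greedy_list :: "('a set \<Rightarrow> bool) \<Rightarrow> 'a list \<Rightarrow> 'a list \<Rightarrow> 'a list" where
  "greedy_list indep acc [] = acc"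
| "greedy_list indep acc (x # xs) =
     (if indep (insert x (set acc)) then greedy_list indep (acc @ [x]) xs
      else greedy_list indep acc xs)"

text \<open>Maximum-weight independent set of the sample S (list), as a list
  a_1, ..., a_k sorted by decreasing weight (computed by the greedy algorithm
  on the sample sorted by decreasing weight).\<close>
definition sample_mwis :: "('a set \<Rightarrow> bool) \<Rightarrow> ('a \<Rightarrow> real) \<Rightarrow> 'a list \<Rightarrow> 'a list" where
  "sample_mwis indep w S = greedy_list indep [] (rev (sort_key w S))"

text \<open>Classical secretary algorithm on arrival order \<sigma> of n elements: observe the
  first floor(n/e) elements, then accept the first element heavier than all
  observed ones (provided accepting it is feasible, i.e. it is not a loop).\<close>
definition classical_secretary ::
  "('a set \<Rightarrow> bool) \<Rightarrow> ('a \<Rightarrow> real) \<Rightarrow> 'a list \<Rightarrow> 'a set" where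
  "classical_secretary indep w \<sigma> =
     (let s = nat \<lfloor>real (length \<sigma>) / exp 1\<rfloor>;
          obs = take s \<sigma>
      in case find (\<lambda>x. \<forall>y\<in>set obs. w y < w x) (drop s \<sigma>) of
           None \<Rightarrow> {}
         | Some x \<Rightarrow> (if indep {x} then {x} else {}))"

text \<open>Second branch, given the arrival order \<sigma>, the sample size m and the
  (1-based) threshold index l.\<close>
definition threshold_greedy ::
  "('a set \<Rightarrow> bool) \<Rightarrow> ('a \<Rightarrow> real) \<Rightarrow> 'a list \<Rightarrow> nat \<Rightarrow> nat \<Rightarrow> 'a set" where
  "threshold_greedy indep w \<sigma> m l =
     (let A = sample_mwis indep w (take m \<sigma>);
          k = length A
      in greedy_on indep {}
           (filter (\<lambda>x. k < l \<or> w (A ! (l - 1)) < w x) (drop m \<sigma>)))"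

text \<open>floor(log_3 k) for k \<ge> 1 (and 0 for k = 0).\<close>
definition flog3 :: "nat \<Rightarrow> nat" where
  "flog3 k = nat \<lfloor>log 3 (real k)\<rfloor>"

definition secretary_alg ::
  "bool \<Rightarrow> 'a set \<Rightarrow> ('a set \<Rightarrow> bool) \<Rightarrow> ('a \<Rightarrow> real) \<Rightarrow> 'a set pmf" where
  "secretary_alg known E indep w =
     bind_pmf (pmf_of_set (permutations_of_set E)) (\<lambda>\<sigma>.
     bind_pmf (bernoulli_pmf (1/2)) (\<lambda>b.
       if b then return_pmf (classical_secretary indep w \<sigma>)
       else
       bind_pmf (binomial_pmf (card E) (1/2)) (\<lambda>m.
         let k = length (sample_mwis indep w (take m \<sigma>)) in
         bind_pmf (if known then return_pmf (flog3 (mrank E indep))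
                   else pmf_of_set {flog3 k, flog3 k + 1}) (\<lambda>t.
         bind_pmf (pmf_of_set {0..t}) (\<lambda>i.
           return_pmf (threshold_greedy indep w \<sigma> m (3 ^ i)))))))"

end

theory Submission
  imports Defs
begin

lemma m_fin: "matroid E indep \<Longrightarrow> finite E" by (simp add: matroid_def)
lemma m_empty: "matroid E indep \<Longrightarrow> indep {}" by (simp add: matroid_def)
lemma m_subE: "matroid E indep \<Longrightarrow> indep I \<Longrightarrow> I \<subseteq> E" by (simp add: matroid_def)
lemma m_sub: "matroid E indep \<Longrightarrow> indep J \<Longrightarrow> I \<subseteq> J \<Longrightarrow> indep I"
  unfolding matroid_def by blast
lemma m_aug: "matroid E indep \<Longrightarrow> indep I \<Longrightarrow> indep J \<Longrightarrow> card I < card J \<Longrightarrow> \<exists>x\<in>J - I. indep (insert x I)"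
  unfolding matroid_def by blast
lemma m_finI: "matroid E indep \<Longrightarrow> indep I \<Longrightarrow> finite I"
  using m_fin m_subE finite_subset by metis

lemma max_card:
  assumes M: "matroid E indep" and R: "indep R" "R \<subseteq> X"
    and mx: "\<forall>y\<in>X - R. \<not> indep (insert y R)"
    and I: "indep I" "I \<subseteq> X"
  shows "card I \<le> card R"
proof (rule ccontr)
  assume "\<not> card I \<le> card R"
  then have "card R < card I" by simp
  from m_aug[OF M R(1) I(1) this] obtain x where "x \<in> I - R" "indep (insert x R)" by blast
  with mx I(2) show False by blast
qed

lemma gl_append: "greedy_list indep acc (xs @ ys) = greedy_list indep (greedy_list indep acc xs) ys"
  by (induction xs arbitrary: acc) auto

lemma gl_prefix: "\<exists>R'. greedy_list indep acc xs = acc @ R' \<and> set R' \<subseteq> set xs"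
proof (induction xs arbitrary: acc)
  case Nil then show ?case by simp
next
  case (Cons x xs)
  show ?case
  proof (cases "indep (insert x (set acc))")
    case True
    from Cons[of "acc @ [x]"] obtain R' where "greedy_list indep (acc @ [x]) xs = (acc @ [x]) @ R'" "set R' \<subseteq> set xs" by blast
    then show ?thesis using True by (intro exI[of _ "x # R'"]) auto
  next
    case False
    from Cons[of acc] obtain R' where "greedy_list indep acc xs = acc @ R'" "set R' \<subseteq> set xs" by blast
    then show ?thesis using False by (intro exI[of _ R']) auto
  qed
qed

lemma gl_indep: "indep (set acc) \<Longrightarrow> indep (set (greedy_list indep acc xs))"
  by (induction xs arbitrary: acc) auto

lemma gl_distinct: "distinct (acc @ xs) \<Longrightarrow> distinct (greedy_list indep acc xs)"
  by (induction xs arbitrary: acc) auto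

lemma gl_sorted: "sorted_wrt P (acc @ xs) \<Longrightarrow> sorted_wrt P (greedy_list indep acc xs)"
proof (induction xs arbitrary: acc)
  case Nil then show ?case by simp
next
  case (Cons x xs)
  have "sorted_wrt P ((acc @ [x]) @ xs)" using Cons.prems by simp
  moreover have "sorted_wrt P (acc @ xs)" using Cons.prems by (auto simp: sorted_wrt_append)
  ultimately show ?case using Cons.IH by auto
qed

lemma gl_max:
  assumes M: "matroid E indep"
  shows "y \<in> set xs \<Longrightarrow> y \<notin> set (greedy_list indep acc xs) \<Longrightarrow>
         \<not> indep (insert y (set (greedy_list indep acc xs)))"
proof (induction xs arbitrary: acc)
  case Nil then show ?case by simp
next
  case (Cons x xs)
  show ?case
  proof (cases "indep (insert x (set acc))")
    case True
    then have eq: "greedy_list indep acc (x # xs) = greedy_list indep (acc @ [x]) xs" by simp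
    show ?thesis
    proof (cases "y = x")
      case True
      obtain R' where "greedy_list indep (acc @ [x]) xs = (acc @ [x]) @ R'" using gl_prefix[of indep "acc @ [x]" xs] by blast
      then have "x \<in> set (greedy_list indep acc (x # xs))" using eq by simp
      then show ?thesis using Cons.prems True by simp
    next
      case False
      then show ?thesis using Cons.IH Cons.prems eq by simp
    qed
  next
    case False
    then have eq: "greedy_list indep acc (x # xs) = greedy_list indep acc xs" by simp
    show ?thesis
    proof (cases "y = x")
      case True
      obtain R' where R': "greedy_list indep acc xs = acc @ R'" using gl_prefix[of indep acc xs] by blast
      show ?thesis
      proof
        assume "indep (insert y (set (greedy_list indep acc (x # xs))))"
        moreover have "insert x (set acc) \<subseteq> insert y (set (greedy_list indep acc (x # xs)))"
          using R' eq True by auto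
        ultimately have "indep (insert x (set acc))" using m_sub[OF M] by blast
        then show False using False by simp
      qed
    next
      case False
      then show ?thesis using Cons.IH Cons.prems eq by simp
    qed
  qed
qed

lemma go_sub: "S \<subseteq> greedy_on indep S xs \<and> greedy_on indep S xs \<subseteq> S \<union> set xs"
proof (induction xs arbitrary: S)
  case Nil then show ?case by simp
next
  case (Cons x xs)
  show ?case
  proof (cases "indep (insert x S)")
    case True
    then show ?thesis using Cons.IH[of "insert x S"] by auto
  next
    case False
    then show ?thesis using Cons.IH[of S] by auto
  qed
qed

lemma go_indep: "indep S \<Longrightarrow> indep (greedy_on indep S xs)"
  by (induction xs arbitrary: S) auto

lemma go_max:
  assumes M: "matroid E indep"
  shows "y \<in> set xs \<Longrightarrow> y \<notin> greedy_on indep S xs \<Longrightarrow> \<not> indep (insert y (greedy_on indep S xs))"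
proof (induction xs arbitrary: S)
  case Nil then show ?case by simp
next
  case (Cons x xs)
  show ?case
  proof (cases "indep (insert x S)")
    case True
    then have eq: "greedy_on indep S (x # xs) = greedy_on indep (insert x S) xs" by simp
    show ?thesis
    proof (cases "y = x")
      case True
      have "x \<in> greedy_on indep (insert x S) xs" using go_sub[of "insert x S" indep xs] by blast
      then show ?thesis using Cons.prems eq True by simp
    next
      case False
      then show ?thesis using Cons.IH Cons.prems eq by simp
    qed
  next
    case False
    then have eq: "greedy_on indep S (x # xs) = greedy_on indep S xs" by simp
    show ?thesis
    proof (cases "y = x")
      case True
      show ?thesis
      proof
        assume "indep (insert y (greedy_on indep S (x # xs)))"
        moreover have "insert x S \<subseteq> insert y (greedy_on indep S (x # xs))"
          using eq True go_sub[of S indep xs] by blast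
        ultimately have "indep (insert x S)" using m_sub[OF M] by blast
        then show False using False by simp
      qed
    next
      case False
      then show ?thesis using Cons.IH Cons.prems eq by simp
    qed
  qed
qed

lemma go_value:
  assumes M: "matroid E indep" and mu: "0 \<le> mu"
    and big: "\<forall>x\<in>set xs. indep {x} \<longrightarrow> mu \<le> w x"
    and I: "indep I" "I \<subseteq> set xs"
  shows "real (card I) * mu \<le> sum w (greedy_on indep {} xs)"
proof -
  define G where "G = greedy_on indep {} xs"
  have Gi: "indep G" unfolding G_def using go_indep m_empty[OF M] by blast
  have GX: "G \<subseteq> set xs" unfolding G_def using go_sub[of "{}" indep xs] by simp
  have mx: "\<forall>y\<in>set xs - G. \<not> indep (insert y G)" unfolding G_def using go_max[OF M] by blast
  have c: "card I \<le> card G" by (rule max_card[OF M Gi GX mx I])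
  have fG: "finite G" using m_finI[OF M Gi] .
  have "\<forall>x\<in>G. mu \<le> w x" using big GX m_sub[OF M Gi] by blast
  then have "(\<Sum>x\<in>G. mu) \<le> sum w G" by (intro sum_mono) auto
  then have "real (card G) * mu \<le> sum w G" by simp
  moreover have "real (card I) * mu \<le> real (card G) * mu" using c mu by (intro mult_right_mono) auto
  ultimately show ?thesis unfolding G_def by linarith
qed

lemma strictify:
  "sorted_wrt (\<lambda>x y. w y \<le> w x) D \<Longrightarrow> distinct D \<Longrightarrow> inj_on w (set D) \<Longrightarrow>
   sorted_wrt (\<lambda>x y. (w y::real) < w x) D"
proof (induction D)
  case Nil then show ?case by simp
next
  case (Cons x D)
  have "\<forall>y\<in>set D. w y < w x"
  proof
    fix y assume y: "y \<in> set D"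
    then have "w y \<le> w x" using Cons.prems(1) by simp
    moreover have "y \<noteq> x" using Cons.prems(2) y by auto
    moreover have "w y \<noteq> w x" using Cons.prems(3) y \<open>y \<noteq> x\<close> unfolding inj_on_def by auto
    ultimately show "w y < w x" by simp
  qed
  moreover have "inj_on w (set D)" using Cons.prems(3) by (rule inj_on_subset) auto
  moreover have "sorted_wrt (\<lambda>x y. w y \<le> w x) D" using Cons.prems(1) by simp
  moreover have "distinct D" using Cons.prems(2) by simp
  ultimately show ?case using Cons.IH by simp
qed

lemma dropWhile_fail:
  assumes mono: "\<forall>a b. P a \<and> a \<le> b \<longrightarrow> P b"
  shows "sorted_wrt (\<lambda>x y. w y \<le> (w x::real)) D \<Longrightarrow> y \<in> set (dropWhile (\<lambda>y. P (w y)) D) \<Longrightarrow> \<not> P (w y)"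
proof (induction D)
  case Nil then show ?case by simp
next
  case (Cons x D)
  show ?case
  proof (cases "P (w x)")
    case True then show ?thesis using Cons by simp
  next
    case False
    then have "y = x \<or> y \<in> set D" using Cons.prems(2) by auto
    then show ?thesis
    proof
      assume "y \<in> set D"
      then have "w y \<le> w x" using Cons.prems(1) by simp
      then show ?thesis using False mono by blast
    qed (use False in simp)
  qed
qed

lemma D_props:
  fixes w :: "'a \<Rightarrow> real" and L :: "'a list"
  defines "D \<equiv> rev (sort_key w L)"
  assumes "distinct L" "inj_on w (set L)"
  shows "set D = set L" "distinct D" "sorted_wrt (\<lambda>x y. w y \<le> w x) D"
    "sorted_wrt (\<lambda>x y. w y < w x) D"
proof -
  show s: "set D = set L" "distinct D" using assms by (auto simp: D_def)
  have "sorted (map w (sort_key w L))" by simp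
  then show s2: "sorted_wrt (\<lambda>x y. w y \<le> w x) D" unfolding D_def sorted_map sorted_wrt_rev .
  show "sorted_wrt (\<lambda>x y. w y < w x) D" using strictify[OF s2] s assms by simp
qed

context
  fixes E :: "'a set" and indep and w :: "'a \<Rightarrow> real" and L :: "'a list"
  assumes M: "matroid E indep" and dL: "distinct L" and inj: "inj_on w (set L)"
begin

lemma smw_basic:
  defines "A \<equiv> sample_mwis indep w L"
  shows "set A \<subseteq> set L" "distinct A" "indep (set A)" "sorted_wrt (\<lambda>x y. w y < w x) A"
proof -
  note D = D_props[OF dL inj]
  show "set A \<subseteq> set L" using gl_prefix[of indep "[]" "rev (sort_key w L)"] D(1)
    unfolding A_def sample_mwis_def by auto
  show "distinct A" unfolding A_def sample_mwis_def using gl_distinct[of "[]" _ indep] D(2) by simp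
  show "indep (set A)" unfolding A_def sample_mwis_def using gl_indep[of indep "[]"] m_empty[OF M] by simp
  show "sorted_wrt (\<lambda>x y. w y < w x) A" unfolding A_def sample_mwis_def
    using gl_sorted[of _ "[]"] D(4) by simp
qed

lemma smw_split:
  assumes mono: "\<And>a b. P a \<Longrightarrow> a \<le> b \<Longrightarrow> P b"
  obtains R1 R2 where "sample_mwis indep w L = R1 @ R2" "\<forall>y\<in>set R1. P (w y)" "\<forall>y\<in>set R2. \<not> P (w y)"
     "\<forall>I. indep I \<and> I \<subseteq> set L \<and> (\<forall>y\<in>I. P (w y)) \<longrightarrow> card I \<le> length R1"
proof -
  define D where "D = rev (sort_key w L)"
  note DP = D_props[OF dL inj, folded D_def]
  define D1 where "D1 = takeWhile (\<lambda>y. P (w y)) D"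
  define D2 where "D2 = dropWhile (\<lambda>y. P (w y)) D"
  have DD: "D = D1 @ D2" unfolding D1_def D2_def by simp
  have D2f: "\<forall>y\<in>set D2. \<not> P (w y)" unfolding D2_def using dropWhile_fail[of P w D] mono DP(3) by blast
  have D1t: "\<forall>y\<in>set D1. P (w y)" unfolding D1_def by (meson set_takeWhileD)
  define R1 where "R1 = greedy_list indep [] D1"
  obtain R2 where R2: "greedy_list indep R1 D2 = R1 @ R2" "set R2 \<subseteq> set D2" using gl_prefix[of indep R1 D2] by blast
  have A: "sample_mwis indep w L = R1 @ R2" unfolding sample_mwis_def D_def[symmetric] DD gl_append R1_def[symmetric] R2(1) ..
  obtain R1' where R1': "R1 = [] @ R1'" "set R1' \<subseteq> set D1" using gl_prefix[of indep "[]" D1] R1_def by blast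
  have R1i: "indep (set R1)" unfolding R1_def using gl_indep[of indep "[]"] m_empty[OF M] by simp
  have "distinct D1" using DP(2) DD by simp
  then have R1d: "distinct R1" unfolding R1_def using gl_distinct[of "[]" D1 indep] by simp
  have X: "{y \<in> set L. P (w y)} \<subseteq> set D1" using DP(1) DD D2f by auto
  have mx: "\<forall>y\<in>set D1 - set R1. \<not> indep (insert y (set R1))" unfolding R1_def using gl_max[OF M] by blast
  have C: "\<forall>I. indep I \<and> I \<subseteq> set L \<and> (\<forall>y\<in>I. P (w y)) \<longrightarrow> card I \<le> length R1"
  proof (intro allI impI)
    fix I assume I: "indep I \<and> I \<subseteq> set L \<and> (\<forall>y\<in>I. P (w y))"
    then have "I \<subseteq> set D1" using X by blast
    then have "card I \<le> card (set R1)" using max_card[OF M R1i _ mx] R1' I by auto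
    then show "card I \<le> length R1" using R1d by (simp add: distinct_card)
  qed
  have R2f: "\<forall>y\<in>set R2. \<not> P (w y)" using R2(2) D2f by blast
  have D1t': "\<forall>y\<in>set R1. P (w y)" using R1' D1t by auto
  show thesis by (rule that[OF A D1t' R2f C])
qed

lemma smw_P1:
  assumes mono: "\<And>a b. P a \<Longrightarrow> a \<le> b \<Longrightarrow> P b"
    and I: "indep I" "I \<subseteq> set L" "\<forall>y\<in>I. P (w y)" and p: "1 \<le> p" "p \<le> card I"
  shows "p \<le> length (sample_mwis indep w L) \<and> P (w (sample_mwis indep w L ! (p - 1)))"
proof -
  obtain R1 R2 where S: "sample_mwis indep w L = R1 @ R2" "\<forall>y\<in>set R1. P (w y)"
    "\<forall>I. indep I \<and> I \<subseteq> set L \<and> (\<forall>y\<in>I. P (w y)) \<longrightarrow> card I \<le> length R1"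
    by (rule smw_split[OF mono])
  have "p \<le> length R1" using S(3) I p by fastforce
  then show ?thesis using S p by (auto simp: nth_append)
qed

lemma smw_P2:
  assumes q: "1 \<le> q" "q \<le> length (sample_mwis indep w L)"
    and I: "indep I" "I \<subseteq> set L" "\<forall>y\<in>I. w (sample_mwis indep w L ! (q - 1)) < w y"
  shows "card I \<le> q - 1"
proof -
  define a where "a = w (sample_mwis indep w L ! (q - 1))"
  have mono: "\<And>x y. a < x \<Longrightarrow> x \<le> y \<Longrightarrow> a < y" by simp
  obtain R1 R2 where S: "sample_mwis indep w L = R1 @ R2" "\<forall>y\<in>set R1. a < w y"
    "\<forall>I. indep I \<and> I \<subseteq> set L \<and> (\<forall>y\<in>I. a < w y) \<longrightarrow> card I \<le> length R1"
    by (rule smw_split[of "\<lambda>x. a < x", OF mono])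
  have "\<not> (q - 1 < length R1)"
  proof
    assume "q - 1 < length R1"
    then have "sample_mwis indep w L ! (q - 1) \<in> set R1" using S(1) by (simp add: nth_append)
    then show False using S(2) a_def by auto
  qed
  then show ?thesis using S(3) I a_def by fastforce
qed

end

context
  fixes E :: "'a set" and indep and w :: "'a \<Rightarrow> real" and LE :: "'a list"
  assumes M: "matroid E indep" and dLE: "distinct LE" and sLE: "set LE = E"
    and inj: "inj_on w E" and nn: "\<forall>x\<in>E. 0 \<le> w x"
begin

lemma injL: "inj_on w (set LE)" using inj sLE by simp

lemma O_basic:
  "set (sample_mwis indep w LE) \<subseteq> E" "distinct (sample_mwis indep w LE)"
  "indep (set (sample_mwis indep w LE))" "sorted_wrt (\<lambda>x y. w y < w x) (sample_mwis indep w LE)"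
  using smw_basic[OF M dLE injL] sLE by auto

lemma O_len: "length (sample_mwis indep w LE) = mrank E indep"
proof -
  define Ol where "Ol = sample_mwis indep w LE"
  have fin: "finite (card ` {I. indep I})"
  proof -
    have "{I. indep I} \<subseteq> Pow E" using m_subE[OF M] by blast
    then show ?thesis using m_fin[OF M] by (meson finite_Pow_iff finite_imageI finite_subset)
  qed
  have "card (set Ol) = length Ol" using O_basic(2) unfolding Ol_def by (rule distinct_card)
  then have mem: "length Ol \<in> card ` {I. indep I}"
    using O_basic(3) unfolding Ol_def by force
  have ub: "y \<le> length Ol" if yin: "y \<in> card ` {I. indep I}" for y
  proof -
    obtain I where I: "indep I" "y = card I" using yin by blast
    show ?thesis
    proof (cases "card I = 0")
      case True then show ?thesis using I by simp
    next
      case False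
      have "I \<subseteq> set LE" using m_subE[OF M I(1)] sLE by simp
      then have "card I \<le> length Ol" using smw_P1[OF M dLE injL, of "\<lambda>_. True" I "card I"] I False
        unfolding Ol_def by simp
      then show ?thesis using I by simp
    qed
  qed
  show ?thesis unfolding mrank_def Ol_def[symmetric] by (rule Max_eqI[symmetric, OF fin ub mem])
qed

lemma O_top:
  assumes x: "x \<in> E" "indep {x}"
  shows "1 \<le> length (sample_mwis indep w LE) \<and> w x \<le> w (sample_mwis indep w LE ! 0)"
proof -
  have "1 \<le> length (sample_mwis indep w LE) \<and> w x \<le> w (sample_mwis indep w LE ! (1 - 1))"
  proof (rule smw_P1[OF M dLE injL, of "\<lambda>a. w x \<le> a" "{x}" 1])
    show "{x} \<subseteq> set LE" using sLE x by simp
  qed (use x in auto)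
  then show ?thesis by simp
qed

lemma O_strict:
  assumes I: "indep I" "I \<subseteq> E" "\<forall>y\<in>I. a < w y" and p: "1 \<le> p" "p \<le> card I"
  shows "p \<le> length (sample_mwis indep w LE) \<and> a < w (sample_mwis indep w LE ! (p - 1))"
proof (rule smw_P1[OF M dLE injL, of "\<lambda>b. a < b" I p])
  show "I \<subseteq> set LE" using sLE I by simp
qed (use I p in auto)

lemma O_opt: "opt_weight E indep w \<le> (\<Sum>j<mrank E indep. w (sample_mwis indep w LE ! j))"
proof -
  define Ol where "Ol = sample_mwis indep w LE"
  define K where "K = mrank E indep"
  have KO: "length Ol = K" unfolding Ol_def K_def by (rule O_len)
  have fin: "finite ((\<lambda>I. sum w I) ` {I. indep I})"
  proof -
    have "{I. indep I} \<subseteq> Pow E" using m_subE[OF M] by blast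
    then show ?thesis using m_fin[OF M] by (meson finite_Pow_iff finite_imageI finite_subset)
  qed
  have ne: "(\<lambda>I. sum w I) ` {I. indep I} \<noteq> {}" using m_empty[OF M] by blast
  have bound: "sum w I \<le> (\<Sum>j<K. w (Ol ! j))" if I: "indep I" for I
  proof -
    have IE: "I \<subseteq> E" using m_subE[OF M I] .
    have fI: "finite I" using m_finI[OF M I] .
    define f where "f y = card {z\<in>I. w y < w z}" for y
    have card_le: "card {z\<in>I. w y \<le> w z} = f y + 1" if y: "y \<in> I" for y
    proof -
      have eq: "{z\<in>I. w y \<le> w z} = insert y {z\<in>I. w y < w z}"
      proof (intro equalityI subsetI)
        fix x assume x: "x \<in> {z\<in>I. w y \<le> w z}"
        show "x \<in> insert y {z\<in>I. w y < w z}"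
        proof (cases "x = y")
          case False
          then have "w x \<noteq> w y" using inj IE x y unfolding inj_on_def by blast
          then show ?thesis using x by auto
        qed simp
      qed (use y in auto)
      have "card {z\<in>I. w y \<le> w z} = card (insert y {z\<in>I. w y < w z})" by (subst eq) (rule refl)
      also have "\<dots> = Suc (card {z\<in>I. w y < w z})" by (rule card_insert_disjoint) (use fI in auto)
      finally show ?thesis unfolding f_def by simp
    qed
    have key: "f y < K \<and> w y \<le> w (Ol ! f y)" if y: "y \<in> I" for y
    proof -
      define J where "J = {z\<in>I. w y \<le> w z}"
      have J1: "indep J" unfolding J_def by (rule m_sub[OF M I]) (rule subsetI, simp)
      have J2: "J \<subseteq> set LE" unfolding J_def using IE sLE by (intro subsetI) auto
      have J3: "\<forall>z\<in>J. w y \<le> w z" unfolding J_def by simp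
      have J4: "f y + 1 \<le> card J" unfolding J_def using card_le[OF y] by simp
      have mono: "\<And>a b. w y \<le> a \<Longrightarrow> a \<le> b \<Longrightarrow> w y \<le> b" by simp
      have "f y + 1 \<le> length Ol \<and> w y \<le> w (Ol ! (f y + 1 - 1))"
        unfolding Ol_def by (rule smw_P1[OF M dLE injL, of "\<lambda>b. w y \<le> b", OF mono J1 J2 J3 _ J4]) auto
      then show ?thesis using KO by simp
    qed
    have finj: "inj_on f I"
    proof (rule inj_onI)
      fix y y' assume yy: "y \<in> I" "y' \<in> I" "f y = f y'"
      show "y = y'"
      proof (rule ccontr)
        assume ne: "y \<noteq> y'"
        then have "w y \<noteq> w y'" using inj yy IE unfolding inj_on_def by blast
        then have "w y < w y' \<or> w y' < w y" by linarith
        then show False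
        proof
          assume lt: "w y < w y'"
          have "insert y' {z\<in>I. w y' < w z} \<subseteq> {z\<in>I. w y < w z}" using lt yy by auto
          moreover have "y' \<notin> {z\<in>I. w y' < w z}" by simp
          moreover have "finite {z\<in>I. w y < w z}" using fI by simp
          ultimately have "card (insert y' {z\<in>I. w y' < w z}) \<le> card {z\<in>I. w y < w z}"
            using card_mono by blast
          then have "card {z\<in>I. w y' < w z} + 1 \<le> card {z\<in>I. w y < w z}"
            using fI by (simp add: card_insert_disjoint)
          then show False using yy(3) unfolding f_def by simp
        next
          assume lt: "w y' < w y"
          have "insert y {z\<in>I. w y < w z} \<subseteq> {z\<in>I. w y' < w z}" using lt yy by auto
          moreover have "y \<notin> {z\<in>I. w y < w z}" by simp
          moreover have "finite {z\<in>I. w y' < w z}" using fI by simp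
          ultimately have "card (insert y {z\<in>I. w y < w z}) \<le> card {z\<in>I. w y' < w z}"
            using card_mono by blast
          then have "card {z\<in>I. w y < w z} + 1 \<le> card {z\<in>I. w y' < w z}"
            using fI by (simp add: card_insert_disjoint)
          then show False using yy(3) unfolding f_def by simp
        qed
      qed
    qed
    have "sum w I \<le> (\<Sum>y\<in>I. w (Ol ! f y))" using key by (intro sum_mono) auto
    also have "\<dots> = (\<Sum>j\<in>f ` I. w (Ol ! j))" by (simp add: sum.reindex[OF finj])
    also have "\<dots> \<le> (\<Sum>j<K. w (Ol ! j))"
    proof (rule sum_mono2)
      show "f ` I \<subseteq> {..<K}" using key by auto
      show "0 \<le> w (Ol ! j)" if jj: "j \<in> {..<K} - f ` I" for j
      proof -
        have "j < length Ol" using jj KO by simp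
        then have "Ol ! j \<in> set Ol" by (rule nth_mem)
        then have "Ol ! j \<in> E" using O_basic(1) unfolding Ol_def by blast
        then show "0 \<le> w (Ol ! j)" using nn by blast
      qed
    qed simp
    finally show ?thesis .
  qed
  show ?thesis unfolding opt_weight_def K_def[symmetric] Ol_def[symmetric]
    using fin ne bound by (subst Max_le_iff) auto
qed

end

lemma flog3_bounds:
  assumes k: "1 \<le> k"
  shows "3 ^ flog3 k \<le> k \<and> k < 3 ^ (flog3 k + 1)"
proof -
  have "0 \<le> log 3 (real k)" using k by simp
  then have "0 \<le> \<lfloor>log 3 (real k)\<rfloor>" by simp
  then have eq: "\<lfloor>log (real (3::nat)) (real k)\<rfloor> = int (flog3 k)" unfolding flog3_def by simp
  have "(3::nat) ^ flog3 k \<le> k \<and> k < 3 ^ (flog3 k + 1)"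
    using floor_log_nat_eq_powr_iff[of 3 k "flog3 k"] eq k by simp
  then show ?thesis by simp
qed

lemma flog3_ge: "3 ^ i \<le> k \<Longrightarrow> i \<le> flog3 k"
proof -
  assume a: "3 ^ i \<le> k"
  have "1 \<le> (3::nat) ^ i" by simp
  then have k: "1 \<le> k" using a by linarith
  have lt: "(3::nat) ^ i < 3 ^ (flog3 k + 1)" using a flog3_bounds[OF k] by linarith
  have "i < flog3 k + 1" using power_less_imp_less_exp[of "3::nat", OF _ lt] by simp
  then show ?thesis by simp
qed

lemma flog3_zero: "flog3 0 = 0" unfolding flog3_def log_def by simp

lemma flog3_mono: "k \<le> r \<Longrightarrow> flog3 k \<le> flog3 r"
proof (cases "k = 0")
  case True then show ?thesis by (simp add: flog3_zero)
next
  case False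
  assume "k \<le> r"
  then show ?thesis using flog3_bounds[of k] False by (intro flog3_ge) simp
qed

lemma flog3_ln: "1 \<le> r \<Longrightarrow> real (flog3 r) \<le> ln (real r)"
proof -
  assume r: "1 \<le> r"
  have "real ((3::nat) ^ flog3 r) \<le> real r" using flog3_bounds[OF r] by linarith
  then have "(3::real) ^ flog3 r \<le> real r" by simp
  then have "ln ((3::real) ^ flog3 r) \<le> ln (real r)" using r by (subst ln_le_cancel_iff) auto
  then have "real (flog3 r) * ln 3 \<le> ln (real r)" by (simp add: ln_realpow)
  moreover have l3: "1 \<le> ln (3::real)"
  proof -
    have "exp 1 \<le> (3::real)" using exp_le by simp
    then have "ln (exp 1) \<le> ln (3::real)" by (subst ln_le_cancel_iff) auto
    then show ?thesis by simp
  qed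
  moreover have "real (flog3 r) * 1 \<le> real (flog3 r) * ln 3"
    by (rule mult_left_mono[OF l3]) simp
  ultimately show ?thesis by linarith
qed

lemma bucket:
  fixes W :: "nat \<Rightarrow> real" and K :: nat
  assumes K: "1 \<le> K" and nonneg: "\<And>j. j < K \<Longrightarrow> 0 \<le> W j"
    and dec: "\<And>j j'. j \<le> j' \<Longrightarrow> j' < K \<Longrightarrow> W j' \<le> W j"
  shows "(\<Sum>j<K. W j) \<le> (\<Sum>i\<le>flog3 K. (if 3^(i+1) - 3 < K then 6 * 3^i * W (3^(i+1) - 3) else 0))"
proof -
  define b where "b j = flog3 (j + 3) - 1" for j
  define g where "g i = (3::nat)^(i+1) - 3" for i
  have bb: "3 ^ (b j + 1) \<le> j + 3 \<and> j + 3 < 3 ^ (b j + 2)" for j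
  proof -
    have "1 \<le> flog3 (j + 3)" using flog3_ge[of 1 "j+3"] by simp
    then have "b j + 1 = flog3 (j + 3)" unfolding b_def by simp
    then show ?thesis using flog3_bounds[of "j+3"] by simp
  qed
  have gj: "g (b j) \<le> j" for j
  proof -
    have "3 ^ (b j + 1) \<le> j + 3" using bb[of j] by blast
    then show ?thesis unfolding g_def by linarith
  qed
  have bF: "b j \<le> flog3 K" if j: "j < K" for j
  proof (rule flog3_ge)
    have "3 * 3 ^ b j \<le> K + 2" using bb[of j] j by simp
    then show "3 ^ b j \<le> K" using K by linarith
  qed
  have "(\<Sum>j<K. W j) \<le> (\<Sum>j<K. W (g (b j)))"
    by (rule sum_mono) (use dec gj in auto)
  also have "\<dots> = (\<Sum>i\<le>flog3 K. (\<Sum>j\<in>{j\<in>{..<K}. b j = i}. W (g (b j))))"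
  proof (rule sum.group[symmetric])
    show "b ` {..<K} \<subseteq> {..flog3 K}" using bF by blast
  qed simp_all
  also have "\<dots> = (\<Sum>i\<le>flog3 K. real (card {j\<in>{..<K}. b j = i}) * W (g i))"
    by (rule sum.cong) simp_all
  also have "\<dots> \<le> (\<Sum>i\<le>flog3 K. (if g i < K then 6 * 3^i * W (g i) else 0))"
  proof (rule sum_mono)
    fix i
    show "real (card {j\<in>{..<K}. b j = i}) * W (g i) \<le> (if g i < K then 6 * 3^i * W (g i) else 0)"
    proof (cases "g i < K")
      case True
      have sub: "{j\<in>{..<K}. b j = i} \<subseteq> {3^(i+1) - 3 ..< 3^(i+2) - 3}"
      proof
        fix j assume "j \<in> {j\<in>{..<K}. b j = i}"
        then have "b j = i" by simp
        then show "j \<in> {3^(i+1) - 3 ..< 3^(i+2) - 3}" using bb[of j] by auto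
      qed
      have "card {j\<in>{..<K}. b j = i} \<le> card {3^(i+1) - 3 ..< (3::nat)^(i+2) - 3}"
        by (rule card_mono[OF _ sub]) simp
      also have "\<dots> = 6 * 3 ^ i"
      proof -
        have "(3::nat) ^ (i+2) = 9 * 3^i" "(3::nat) ^ (i+1) = 3 * 3^i" by simp_all
        moreover have "1 \<le> (3::nat)^i" by simp
        ultimately show ?thesis by simp
      qed
      finally have c0: "card {j\<in>{..<K}. b j = i} \<le> 6 * 3 ^ i" .
      have "real (card {j\<in>{..<K}. b j = i}) \<le> real (6 * 3 ^ i)" by (rule of_nat_mono[OF c0])
      then have c: "real (card {j\<in>{..<K}. b j = i}) \<le> 6 * 3 ^ i" by simp
      have "0 \<le> W (g i)" using nonneg True by simp
      then show ?thesis using True c mult_right_mono by auto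
    next
      case False
      have emp: "{j\<in>{..<K}. b j = i} = {}"
      proof (rule ccontr)
        assume "{j\<in>{..<K}. b j = i} \<noteq> {}"
        then obtain j where j: "j < K" "b j = i" by blast
        then have "g i \<le> j" using gj[of j] by simp
        then show False using j False by simp
      qed
      have cz: "card {j\<in>{..<K}. b j = i} = 0" by (subst emp) simp
      show ?thesis unfolding cz using False by simp
    qed
  qed
  finally show ?thesis unfolding g_def .
qed

lemma card_take_fiber:
  assumes fE: "finite E" and SE: "S \<subseteq> E" and cS: "card S = m"
  shows "card {\<sigma>\<in>permutations_of_set E. set (take m \<sigma>) = S} = fact m * fact (card E - m)"
proof -
  define A where "A = {\<sigma>\<in>permutations_of_set E. set (take m \<sigma>) = S}"
  define A' where "A' = permutations_of_set S \<times> permutations_of_set (E - S)"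
  have fS: "finite S" using fE SE finite_subset by blast
  have bij: "bij_betw (\<lambda>\<sigma>. (take m \<sigma>, drop m \<sigma>)) A A'"
  proof (rule bij_betw_byWitness[where f' = "\<lambda>(a, b). a @ b"])
    show "\<forall>a\<in>A. (\<lambda>(a, b). a @ b) (take m a, drop m a) = a" by simp
    show "\<forall>a'\<in>A'. (take m ((\<lambda>(a, b). a @ b) a'), drop m ((\<lambda>(a, b). a @ b) a')) = a'"
    proof
      fix a' assume "a' \<in> A'"
      then obtain a b where ab: "a' = (a, b)" "a \<in> permutations_of_set S" by (auto simp: A'_def)
      then have "length a = m" using cS by (simp add: length_finite_permutations_of_set)
      then show "(take m ((\<lambda>(a, b). a @ b) a'), drop m ((\<lambda>(a, b). a @ b) a')) = a'" using ab by simp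
    qed
    show "(\<lambda>\<sigma>. (take m \<sigma>, drop m \<sigma>)) ` A \<subseteq> A'"
    proof
      fix x assume "x \<in> (\<lambda>\<sigma>. (take m \<sigma>, drop m \<sigma>)) ` A"
      then obtain \<sigma> where s: "\<sigma> \<in> A" "x = (take m \<sigma>, drop m \<sigma>)" by blast
      have d: "distinct \<sigma>" "set \<sigma> = E" "set (take m \<sigma>) = S" using s(1) by (auto simp: A_def permutations_of_set_def)
      have dd: "distinct (take m \<sigma> @ drop m \<sigma>)" using d(1) by simp
      have u: "set (take m \<sigma>) \<union> set (drop m \<sigma>) = E" using d(2) by (metis append_take_drop_id set_append)
      have di: "set (take m \<sigma>) \<inter> set (drop m \<sigma>) = {}" using dd by (simp only: distinct_append)
      have "set (drop m \<sigma>) = E - S" using u di d(3) by blast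
      then show "x \<in> A'" using s(2) d dd unfolding A'_def by (auto intro!: permutations_of_setI)
    qed
    show "(\<lambda>(a, b). a @ b) ` A' \<subseteq> A"
    proof
      fix x assume "x \<in> (\<lambda>(a, b). a @ b) ` A'"
      then obtain a b where ab: "x = a @ b" "a \<in> permutations_of_set S" "b \<in> permutations_of_set (E - S)"
        by (auto simp: A'_def)
      have la: "length a = m" using ab(2) cS by (simp add: length_finite_permutations_of_set)
      have sa: "set a = S" "distinct a" using ab(2) by (auto simp: permutations_of_set_def)
      have sb: "set b = E - S" "distinct b" using ab(3) by (auto simp: permutations_of_set_def)
      have "distinct (a @ b)" using sa sb by auto
      moreover have "set (a @ b) = E" using sa sb SE by auto
      moreover have "set (take m (a @ b)) = S" using la sa by simp
      ultimately show "x \<in> A" using ab(1) unfolding A_def by (auto intro!: permutations_of_setI)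
    qed
  qed
  have "card A = card A'" using bij_betw_same_card[OF bij] .
  also have "\<dots> = fact m * fact (card E - m)"
    unfolding A'_def card_cartesian_product using fS fE SE cS by (simp add: card_Diff_subset)
  finally show ?thesis unfolding A_def .
qed

lemma perm_average:
  fixes \<psi> :: "'a set \<Rightarrow> real"
  assumes fE: "finite E"
  shows "(\<Sum>m\<le>card E. real (card E choose m) * (\<Sum>\<sigma>\<in>permutations_of_set E. \<psi> (set (take m \<sigma>))))
         = fact (card E) * (\<Sum>S\<in>Pow E. \<psi> S)"
proof -
  define n where "n = card E"
  have step: "real (n choose m) * (\<Sum>\<sigma>\<in>permutations_of_set E. \<psi> (set (take m \<sigma>)))
        = fact n * (\<Sum>S\<in>{S\<in>Pow E. card S = m}. \<psi> S)" if m: "m \<le> n" for m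
  proof -
    have img: "(\<lambda>\<sigma>. set (take m \<sigma>)) ` permutations_of_set E \<subseteq> {S\<in>Pow E. card S = m}"
    proof
      fix x assume "x \<in> (\<lambda>\<sigma>. set (take m \<sigma>)) ` permutations_of_set E"
      then obtain \<sigma> where s: "\<sigma> \<in> permutations_of_set E" "x = set (take m \<sigma>)" by blast
      have "distinct \<sigma>" "set \<sigma> = E" "length \<sigma> = n" using s(1) unfolding n_def
        by (auto simp: permutations_of_set_def length_finite_permutations_of_set distinct_card[symmetric])
      then have "card (set (take m \<sigma>)) = m" "set (take m \<sigma>) \<subseteq> E" using m
        by (auto simp: distinct_card dest: in_set_takeD)
      then show "x \<in> {S\<in>Pow E. card S = m}" using s(2) by simp
    qed
    have "(\<Sum>\<sigma>\<in>permutations_of_set E. \<psi> (set (take m \<sigma>)))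
        = (\<Sum>S\<in>{S\<in>Pow E. card S = m}. (\<Sum>\<sigma>\<in>{\<sigma>\<in>permutations_of_set E. set (take m \<sigma>) = S}. \<psi> (set (take m \<sigma>))))"
      using fE img by (intro sum.group[symmetric]) auto
    also have "\<dots> = (\<Sum>S\<in>{S\<in>Pow E. card S = m}. real (fact m * fact (n - m)) * \<psi> S)"
    proof (rule sum.cong[OF refl])
      fix S assume S: "S \<in> {S\<in>Pow E. card S = m}"
      have "(\<Sum>\<sigma>\<in>{\<sigma>\<in>permutations_of_set E. set (take m \<sigma>) = S}. \<psi> (set (take m \<sigma>)))
          = (\<Sum>\<sigma>\<in>{\<sigma>\<in>permutations_of_set E. set (take m \<sigma>) = S}. \<psi> S)" by (rule sum.cong) auto
      also have "\<dots> = real (card {\<sigma>\<in>permutations_of_set E. set (take m \<sigma>) = S}) * \<psi> S" by simp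
      also have "\<dots> = real (fact m * fact (n - m)) * \<psi> S"
        using card_take_fiber[OF fE, of S m] S unfolding n_def by simp
      finally show "(\<Sum>\<sigma>\<in>{\<sigma>\<in>permutations_of_set E. set (take m \<sigma>) = S}. \<psi> (set (take m \<sigma>))) =
        real (fact m * fact (n - m)) * \<psi> S" .
    qed
    also have "\<dots> = real (fact m * fact (n - m)) * (\<Sum>S\<in>{S\<in>Pow E. card S = m}. \<psi> S)"
      by (simp add: sum_distrib_left)
    finally have "real (n choose m) * (\<Sum>\<sigma>\<in>permutations_of_set E. \<psi> (set (take m \<sigma>)))
        = real (n choose m) * real (fact m * fact (n - m)) * (\<Sum>S\<in>{S\<in>Pow E. card S = m}. \<psi> S)" by simp
    also have "real (n choose m) * real (fact m * fact (n - m)) = fact n"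
    proof -
      have "fact m * fact (n - m) * (n choose m) = (fact n :: nat)" by (rule binomial_fact_lemma[OF m])
      then have "real (fact m * fact (n - m) * (n choose m)) = real (fact n :: nat)" by simp
      then show ?thesis by (simp add: mult.commute)
    qed
    finally show ?thesis .
  qed
  have "(\<Sum>m\<le>n. real (n choose m) * (\<Sum>\<sigma>\<in>permutations_of_set E. \<psi> (set (take m \<sigma>))))
      = (\<Sum>m\<le>n. fact n * (\<Sum>S\<in>{S\<in>Pow E. card S = m}. \<psi> S))" by (rule sum.cong) (simp_all add: step)
  also have "\<dots> = fact n * (\<Sum>m\<le>n. (\<Sum>S\<in>{S\<in>Pow E. card S = m}. \<psi> S))" by (simp add: sum_distrib_left)
  also have "(\<Sum>m\<le>n. (\<Sum>S\<in>{S\<in>Pow E. card S = m}. \<psi> S)) = (\<Sum>S\<in>Pow E. \<psi> S)"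
  proof (rule sum.group)
    show "card ` Pow E \<subseteq> {..n}" unfolding n_def using fE by (auto intro: card_mono)
  qed (use fE in simp_all)
  finally show ?thesis unfolding n_def .
qed

lemma split_count:
  assumes fA: "finite A" and fB: "finite B" and dis: "A \<inter> B = {}"
  shows "card {T\<in>Pow (A \<union> B). P (T \<inter> A) \<and> Q (T \<inter> B)} = card {U\<in>Pow A. P U} * card {V\<in>Pow B. Q V}"
proof -
  have bij: "bij_betw (\<lambda>T. (T \<inter> A, T \<inter> B)) {T\<in>Pow (A \<union> B). P (T \<inter> A) \<and> Q (T \<inter> B)}
     ({U\<in>Pow A. P U} \<times> {V\<in>Pow B. Q V})"
  proof (rule bij_betw_byWitness[where f' = "\<lambda>(U, V). U \<union> V"])
    show "\<forall>a\<in>{T\<in>Pow (A \<union> B). P (T \<inter> A) \<and> Q (T \<inter> B)}. (\<lambda>(U, V). U \<union> V) (a \<inter> A, a \<inter> B) = a" by auto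
    show "\<forall>a'\<in>{U\<in>Pow A. P U} \<times> {V\<in>Pow B. Q V}.
       ((\<lambda>(U, V). U \<union> V) a' \<inter> A, (\<lambda>(U, V). U \<union> V) a' \<inter> B) = a'"
    proof
      fix a' assume "a' \<in> {U\<in>Pow A. P U} \<times> {V\<in>Pow B. Q V}"
      then obtain U V where "a' = (U, V)" "U \<subseteq> A" "V \<subseteq> B" by auto
      then show "((\<lambda>(U, V). U \<union> V) a' \<inter> A, (\<lambda>(U, V). U \<union> V) a' \<inter> B) = a'" using dis by auto
    qed
    show "(\<lambda>T. (T \<inter> A, T \<inter> B)) ` {T\<in>Pow (A \<union> B). P (T \<inter> A) \<and> Q (T \<inter> B)} \<subseteq> {U\<in>Pow A. P U} \<times> {V\<in>Pow B. Q V}"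
      by auto
    show "(\<lambda>(U, V). U \<union> V) ` ({U\<in>Pow A. P U} \<times> {V\<in>Pow B. Q V}) \<subseteq> {T\<in>Pow (A \<union> B). P (T \<inter> A) \<and> Q (T \<inter> B)}"
    proof
      fix x assume "x \<in> (\<lambda>(U, V). U \<union> V) ` ({U\<in>Pow A. P U} \<times> {V\<in>Pow B. Q V})"
      then obtain U V where uv: "x = U \<union> V" "U \<subseteq> A" "V \<subseteq> B" "P U" "Q V" by auto
      have "(U \<union> V) \<inter> A = U" "(U \<union> V) \<inter> B = V" using uv dis by auto
      then show "x \<in> {T\<in>Pow (A \<union> B). P (T \<inter> A) \<and> Q (T \<inter> B)}" using uv by auto
    qed
  qed
  show ?thesis using bij_betw_same_card[OF bij] by (simp add: card_cartesian_product)
qed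

lemma count_restrict:
  assumes fE: "finite E" and DE: "D \<subseteq> E"
  shows "card {S\<in>Pow E. P (S \<inter> D)} = card {T\<in>Pow D. P T} * 2 ^ (card E - card D)"
proof -
  have fD: "finite D" using fE DE finite_subset by blast
  have E: "E = D \<union> (E - D)" using DE by blast
  have "{S\<in>Pow E. P (S \<inter> D)} = {T\<in>Pow (D \<union> (E - D)). P (T \<inter> D) \<and> (\<lambda>_. True) (T \<inter> (E - D))}"
    using E by simp
  also have "card \<dots> = card {U\<in>Pow D. P U} * card {V\<in>Pow (E - D). True}"
    by (rule split_count) (use fD fE in auto)
  also have "card {V\<in>Pow (E - D). True} = 2 ^ (card E - card D)"
  proof -
    have "{V\<in>Pow (E - D). True} = Pow (E - D)" by blast
    moreover have "card (Pow (E - D)) = 2 ^ card (E - D)" using fE by (intro card_Pow) simp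
    ultimately show ?thesis using fE DE fD by (simp add: card_Diff_subset)
  qed
  finally show ?thesis .
qed

lemma half_count:
  assumes fA: "finite A" and comp: "\<And>U. U \<subseteq> A \<Longrightarrow> \<not> P U \<Longrightarrow> P (A - U)"
  shows "2 ^ card A \<le> 2 * card {U\<in>Pow A. P U}"
proof -
  have inj: "inj_on (\<lambda>U. A - U) {U\<in>Pow A. \<not> P U}" by (rule inj_onI) auto
  have "(\<lambda>U. A - U) ` {U\<in>Pow A. \<not> P U} \<subseteq> {U\<in>Pow A. P U}" using comp by auto
  then have le: "card {U\<in>Pow A. \<not> P U} \<le> card {U\<in>Pow A. P U}"
    using card_inj_on_le[OF inj] fA by auto
  have "card (Pow A) = card {U\<in>Pow A. P U} + card {U\<in>Pow A. \<not> P U}"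
  proof -
    have "Pow A = {U\<in>Pow A. P U} \<union> {U\<in>Pow A. \<not> P U}" by auto
    moreover have "{U\<in>Pow A. P U} \<inter> {U\<in>Pow A. \<not> P U} = {}" by auto
    ultimately show ?thesis using fA by (metis (no_types, lifting) card_Un_disjoint finite_Pow_iff finite_Un)
  qed
  then show ?thesis using le card_Pow[OF fA] by linarith
qed

lemma sum_if_const:
  "finite X \<Longrightarrow> (\<Sum>S\<in>X. if c S then (v::real) else 0) = v * real (card {S\<in>X. c S})"
proof -
  assume "finite X"
  have "X \<inter> Collect c = {S\<in>X. c S}" by auto
  then show ?thesis using \<open>finite X\<close> by (simp add: sum.If_cases)
qed

lemma exp_bind:
  fixes g :: "'b \<Rightarrow> real"
  assumes bnd: "\<And>y. \<bar>g y\<bar> \<le> B"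
  shows "measure_pmf.expectation (bind_pmf p f) g = measure_pmf.expectation p (\<lambda>x. measure_pmf.expectation (f x) g)"
  unfolding measure_pmf_bind
proof (rule integral_bind[where K="count_space UNIV" and B=B and B'=1])
  show "(\<lambda>x. measure_pmf (f x)) \<in> measurable (measure_pmf p) (subprob_algebra (count_space UNIV))"
    by (simp add: measure_pmf_in_subprob_algebra)
  show "finite_measure (measure_pmf p)" by (rule measure_pmf.finite_measure_axioms)
  show "AE x in measure_pmf p. emeasure (measure_pmf (f x)) (space (measure_pmf (f x))) \<le> ennreal 1"
    by (simp add: measure_pmf.emeasure_space_1)
qed (simp_all add: bnd)

lemma exp_return: "measure_pmf.expectation (return_pmf x) (g :: 'b \<Rightarrow> real) = g x"
  by (simp add: integral_return)

lemma exp_set: "finite S \<Longrightarrow> S \<noteq> {} \<Longrightarrow> measure_pmf.expectation (pmf_of_set S) (g :: 'b \<Rightarrow> real) = sum g S / card S"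
  by (rule integral_pmf_of_set)

lemma exp_bern: "measure_pmf.expectation (bernoulli_pmf (1/2)) (g :: bool \<Rightarrow> real) = (g True + g False) / 2"
  by simp

lemma exp_binom:
  "measure_pmf.expectation (binomial_pmf n (1/2)) (g :: nat \<Rightarrow> real) = (\<Sum>m\<le>n. real (n choose m) * g m) / 2 ^ n"
proof -
  have "measure_pmf.expectation (binomial_pmf n (1/2)) g = (\<Sum>m\<le>n. pmf (binomial_pmf n (1/2)) m * g m)"
    by (subst integral_measure_pmf_real[where A="{..n}"]) (auto simp: mult.commute)
  also have "\<dots> = (\<Sum>m\<le>n. real (n choose m) * g m / 2 ^ n)"
  proof (rule sum.cong[OF refl])
    fix m assume "m \<in> {..n}"
    then have mn: "m \<le> n" by simp
    have "(1/2::real) ^ m * (1/2) ^ (n - m) = (1/2) ^ (m + (n - m))"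
      by (simp add: power_add)
    also have "\<dots> = (1/2) ^ n" using mn by simp
    also have "\<dots> = 1 / 2 ^ n" by (simp add: power_divide)
    finally have h: "(1/2::real) ^ m * (1/2) ^ (n - m) = 1 / 2 ^ n" .
    have "pmf (binomial_pmf n (1/2)) m = real (n choose m) * ((1/2) ^ m * (1/2) ^ (n - m))"
      by (simp add: pmf_binomial mult.assoc)
    also have "\<dots> = real (n choose m) / 2 ^ n" by (subst h) simp
    finally show "pmf (binomial_pmf n (1/2)) m * g m = real (n choose m) * g m / 2 ^ n" by simp
  qed
  also have "\<dots> = (\<Sum>m\<le>n. real (n choose m) * g m) / 2 ^ n" by (simp add: sum_divide_distrib)
  finally show ?thesis .
qed

locale SA =
  fixes E :: "'a set" and indep and w :: "'a \<Rightarrow> real" and LE :: "'a list"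
  assumes M: "matroid E indep" and dLE: "distinct LE" and sLE: "set LE = E"
    and inj: "inj_on w E" and nn: "\<forall>x\<in>E. 0 \<le> w x" and r1: "1 \<le> mrank E indep"
begin

definition "Ol = sample_mwis indep w LE"
definition "K = length Ol"
definition "Wt j = w (Ol ! j)"
definition "Aset i = (\<lambda>j. Ol ! j) ` {3^i - 1 ..< 3*3^i - 2}"
definition "Bset i = (\<lambda>j. Ol ! j) ` {..< 3^i - 1}"
definition "cond i S = (if i = 0 then (Ol ! 0 \<notin> S \<and> (\<forall>y\<in>E. indep {y} \<and> y \<noteq> Ol ! 0 \<longrightarrow>
      (\<exists>z\<in>S. indep {z} \<and> z \<noteq> Ol ! 0 \<and> w y \<le> w z)))
   else (3*3^i - 2 \<le> K \<and> 3^i \<le> card (S \<inter> Aset i) \<and> 3^i - 1 \<le> 2 * card (Bset i - S)))"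
definition "val i = (if i = 0 then Wt 0 else if 3*3^i - 2 \<le> K then (3^i - 1 :: real) / 2 * Wt (3*3^i - 3) else 0)"

lemma Ol_facts: "set Ol \<subseteq> E" "distinct Ol" "indep (set Ol)" "sorted_wrt (\<lambda>x y. w y < w x) Ol" "K = mrank E indep"
  using O_basic[OF M dLE sLE inj nn] O_len[OF M dLE sLE inj nn] unfolding Ol_def K_def by auto

lemma K1: "1 \<le> K" using Ol_facts(5) r1 by simp

lemma OlE: "j < K \<Longrightarrow> Ol ! j \<in> E" using Ol_facts(1) unfolding K_def by (meson nth_mem subsetD)

lemma Wt_nn: "j < K \<Longrightarrow> 0 \<le> Wt j" using OlE nn unfolding Wt_def by blast

lemma Wt_dec: "j \<le> j' \<Longrightarrow> j' < K \<Longrightarrow> Wt j' \<le> Wt j"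
proof -
  assume a: "j \<le> j'" "j' < K"
  show ?thesis
  proof (cases "j = j'")
    case False
    then have "j < j'" using a by simp
    then have "w (Ol ! j') < w (Ol ! j)" using Ol_facts(4) a unfolding sorted_wrt_iff_nth_less K_def by blast
    then show ?thesis unfolding Wt_def by simp
  qed simp
qed

lemma Wt_strict: "j < j' \<Longrightarrow> j' < K \<Longrightarrow> Wt j' < Wt j"
  using Ol_facts(4) unfolding sorted_wrt_iff_nth_less K_def Wt_def by blast

lemma val_nn: "0 \<le> val i"
proof -
  have "0 \<le> Wt 0" using Wt_nn K1 by simp
  moreover have "3*3^i - 2 \<le> K \<Longrightarrow> 0 \<le> (3^i - 1 :: real) / 2 * Wt (3*3^i - 3)"
  proof -
    assume a: "3*3^i - 2 \<le> K"
    have "(3::nat) \<le> 3*3^i" by simp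
    then have "3*3^i - 3 < K" using a by linarith
    then have "0 \<le> Wt (3*3^i - 3)" by (rule Wt_nn)
    moreover have "(1::real) \<le> 3^i" by simp
    ultimately show ?thesis by simp
  qed
  ultimately show ?thesis unfolding val_def by simp
qed

lemma perm_facts:
  assumes \<sigma>: "\<sigma> \<in> permutations_of_set E"
  shows "distinct (take m \<sigma>)" "set (take m \<sigma>) \<subseteq> E" "inj_on w (set (take m \<sigma>))"
    "set (drop m \<sigma>) = E - set (take m \<sigma>)"
proof -
  have d: "distinct \<sigma>" "set \<sigma> = E" using \<sigma> by (auto simp: permutations_of_set_def)
  show "distinct (take m \<sigma>)" using d by simp
  show s: "set (take m \<sigma>) \<subseteq> E" using d by (metis set_take_subset)
  show "inj_on w (set (take m \<sigma>))" using inj s by (rule inj_on_subset)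
  have dd: "distinct (take m \<sigma> @ drop m \<sigma>)" using d(1) by simp
  have u: "set (take m \<sigma>) \<union> set (drop m \<sigma>) = E" using d(2) by (metis append_take_drop_id set_append)
  have di: "set (take m \<sigma>) \<inter> set (drop m \<sigma>) = {}" using dd by (simp only: distinct_append)
  show "set (drop m \<sigma>) = E - set (take m \<sigma>)" using u di by blast
qed

lemma tg_sub:
  assumes \<sigma>: "\<sigma> \<in> permutations_of_set E"
  shows "threshold_greedy indep w \<sigma> m l \<subseteq> E"
proof -
  have "threshold_greedy indep w \<sigma> m l \<subseteq> {} \<union> set (filter (\<lambda>x. length (sample_mwis indep w (take m \<sigma>)) < l \<or>
      w (sample_mwis indep w (take m \<sigma>) ! (l - 1)) < w x) (drop m \<sigma>))"
    unfolding threshold_greedy_def Let_def by (rule conjunct2[OF go_sub])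
  also have "\<dots> \<subseteq> E" using perm_facts(4)[OF \<sigma>, of m] by auto
  finally show ?thesis .
qed

lemma tg_nn: "\<sigma> \<in> permutations_of_set E \<Longrightarrow> 0 \<le> sum w (threshold_greedy indep w \<sigma> m l)"
  using tg_sub nn by (meson subset_iff sum_nonneg)

end

context SA begin

lemma PW0:
  assumes \<sigma>: "\<sigma> \<in> permutations_of_set E" and c: "cond 0 (set (take m \<sigma>))"
  shows "Wt 0 \<le> sum w (threshold_greedy indep w \<sigma> m 1)"
proof -
  define L where "L = take m \<sigma>"
  define S where "S = set L"
  define A where "A = sample_mwis indep w L"
  define k where "k = length A"
  define ob where "ob = Ol ! 0"
  note pf = perm_facts[OF \<sigma>, of m, folded L_def S_def]
  have dL: "distinct L" and SE: "S \<subseteq> E" and injL: "inj_on w (set L)" and N: "set (drop m \<sigma>) = E - S"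
    using pf unfolding S_def by auto
  have oE: "ob \<in> E" unfolding ob_def using OlE K1 by simp
  have oOl: "ob \<in> set Ol" unfolding ob_def using K1 unfolding K_def by (intro nth_mem) linarith
  have io: "indep {ob}" using m_sub[OF M Ol_facts(3)] oOl by simp
  have oS: "ob \<notin> S" and H: "\<forall>y\<in>E. indep {y} \<and> y \<noteq> ob \<longrightarrow> (\<exists>z\<in>S. indep {z} \<and> z \<noteq> ob \<and> w y \<le> w z)"
    using c unfolding cond_def S_def L_def ob_def by auto
  have A_basic: "set A \<subseteq> set L" "indep (set A)" using smw_basic[OF M dL injL] unfolding A_def by auto
  have tg: "threshold_greedy indep w \<sigma> m 1 = greedy_on indep {} (filter (\<lambda>x. k < 1 \<or> w (A ! 0) < w x) (drop m \<sigma>))"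
    unfolding threshold_greedy_def Let_def A_def k_def L_def by simp
  have big: "\<forall>x\<in>set (filter (\<lambda>x. k < 1 \<or> w (A ! 0) < w x) (drop m \<sigma>)). indep {x} \<longrightarrow> Wt 0 \<le> w x"
  proof (intro ballI impI)
    fix x assume x: "x \<in> set (filter (\<lambda>x. k < 1 \<or> w (A ! 0) < w x) (drop m \<sigma>))" and ix: "indep {x}"
    have xE: "x \<in> E" and xc: "k < 1 \<or> w (A ! 0) < w x" using x N by auto
    show "Wt 0 \<le> w x"
    proof (cases "x = ob")
      case True then show ?thesis unfolding Wt_def ob_def by simp
    next
      case False
      then obtain z where z: "z \<in> S" "indep {z}" "z \<noteq> ob" "w x \<le> w z" using H xE ix by blast
      have zL: "{z} \<subseteq> set L" using z unfolding S_def by simp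
      show ?thesis
      proof (cases "k < 1")
        case True
        have "1 \<le> length A \<and> True"
          unfolding A_def by (rule smw_P1[OF M dL injL, of "\<lambda>_. True" "{z}" 1]) (use z zL in auto)
        then show ?thesis using True k_def by simp
      next
        case False
        then have "w (A ! 0) < w x" using xc by simp
        then have "w (A ! (1 - 1)) < w z" using z by simp
        then have "card {z} \<le> 1 - 1"
          using smw_P2[OF M dL injL, of 1 "{z}"] False z zL unfolding A_def k_def by auto
        then show ?thesis by simp
      qed
    qed
  qed
  have oF: "{ob} \<subseteq> set (filter (\<lambda>x. k < 1 \<or> w (A ! 0) < w x) (drop m \<sigma>))"
  proof -
    have "ob \<in> set (drop m \<sigma>)" using N oE oS by simp
    moreover have "k < 1 \<or> w (A ! 0) < w ob"
    proof (cases "k < 1")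
      case False
      then have a0: "A ! 0 \<in> set A" unfolding k_def by simp
      then have a0S: "A ! 0 \<in> S" using A_basic unfolding S_def by blast
      then have a0E: "A ! 0 \<in> E" using SE by blast
      have "indep {A ! 0}" using m_sub[OF M A_basic(2)] a0 by simp
      then have "w (A ! 0) \<le> w ob" using O_top[OF M dLE sLE inj nn a0E] unfolding ob_def Ol_def by simp
      moreover have "A ! 0 \<noteq> ob" using a0S oS by blast
      then have "w (A ! 0) \<noteq> w ob" using inj a0E oE unfolding inj_on_def by blast
      ultimately show ?thesis by simp
    qed simp
    ultimately show ?thesis by simp
  qed
  have "real (card {ob}) * Wt 0 \<le> sum w (greedy_on indep {} (filter (\<lambda>x. k < 1 \<or> w (A ! 0) < w x) (drop m \<sigma>)))"
    by (rule go_value[OF M _ big io oF]) (use Wt_nn K1 in simp)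
  then show ?thesis using tg by simp
qed

lemma PWi:
  assumes \<sigma>: "\<sigma> \<in> permutations_of_set E" and c: "cond i (set (take m \<sigma>))" and i: "1 \<le> i"
  shows "val i \<le> sum w (threshold_greedy indep w \<sigma> m (3^i)) \<and> 3^i \<le> length (sample_mwis indep w (take m \<sigma>))"
proof -
  define L where "L = take m \<sigma>"
  define S where "S = set L"
  define A where "A = sample_mwis indep w L"
  define k where "k = length A"
  define q :: nat where "q = 3^i"
  note pf = perm_facts[OF \<sigma>, of m, folded L_def S_def]
  have dL: "distinct L" and SE: "S \<subseteq> E" and injL: "inj_on w (set L)" and N: "set (drop m \<sigma>) = E - S"
    using pf unfolding S_def by auto
  have q3: "3 \<le> q" unfolding q_def using power_increasing[OF i, of "3::nat"] by simp
  have cK: "3*q - 2 \<le> K" and cA: "q \<le> card (S \<inter> Aset i)" and cB: "q - 1 \<le> 2 * card (Bset i - S)"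
    using c i unfolding cond_def S_def L_def q_def by auto
  define x0 where "x0 = Wt (3*q - 3)"
  have x0K: "3*q - 3 < K" using cK q3 by linarith
  have x0nn: "0 \<le> x0" unfolding x0_def using Wt_nn x0K by simp
  have A_basic: "set A \<subseteq> set L" "indep (set A)" "distinct A" "sorted_wrt (\<lambda>x y. w y < w x) A"
    using smw_basic[OF M dL injL] unfolding A_def by auto
  have AOl: "Aset i \<subseteq> set Ol" unfolding Aset_def q_def[symmetric] using cK unfolding K_def by auto
  have BOl: "Bset i \<subseteq> set Ol" unfolding Bset_def q_def[symmetric] using cK unfolding K_def by auto
  have AI1: "indep (S \<inter> Aset i)" using m_sub[OF M Ol_facts(3)] AOl by blast
  have AI2: "\<forall>y\<in>S \<inter> Aset i. x0 \<le> w y"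
  proof
    fix y assume "y \<in> S \<inter> Aset i"
    then obtain j where j: "y = Ol ! j" "q - 1 \<le> j" "j < 3*q - 2" unfolding Aset_def q_def by auto
    then have "Wt (3*q - 3) \<le> Wt j" using Wt_dec[of j "3*q - 3"] x0K by simp
    then show "x0 \<le> w y" unfolding x0_def Wt_def j(1) .
  qed
  have P1: "q \<le> length A \<and> x0 \<le> w (A ! (q - 1))"
    unfolding A_def by (rule smw_P1[OF M dL injL, of "\<lambda>b. x0 \<le> b" "S \<inter> Aset i" q])
      (use AI1 AI2 cA q3 in \<open>auto simp: S_def\<close>)
  then have qk: "q \<le> k" unfolding k_def by simp
  define a where "a = w (A ! (q - 1))"
  have x0a: "x0 \<le> a" using P1 a_def by simp
  have tg: "threshold_greedy indep w \<sigma> m q = greedy_on indep {} (filter (\<lambda>x. k < q \<or> a < w x) (drop m \<sigma>))"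
    unfolding threshold_greedy_def Let_def A_def k_def L_def a_def by simp
  have big: "\<forall>x\<in>set (filter (\<lambda>x. k < q \<or> a < w x) (drop m \<sigma>)). indep {x} \<longrightarrow> x0 \<le> w x"
    using qk x0a by auto
  have T: "indep (set (take (q - 1) A))" "set (take (q - 1) A) \<subseteq> E" "\<forall>t\<in>set (take (q - 1) A). a < w t"
    "card (set (take (q - 1) A)) = q - 1"
  proof -
    show "indep (set (take (q - 1) A))" using m_sub[OF M A_basic(2)] by (meson set_take_subset)
    show "set (take (q - 1) A) \<subseteq> E" using A_basic(1) SE S_def by (meson set_take_subset subset_trans)
    show "\<forall>t\<in>set (take (q - 1) A). a < w t"
    proof
      fix t assume "t \<in> set (take (q - 1) A)"
      then obtain j where j: "j < q - 1" "t = A ! j" using qk unfolding k_def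
        by (auto simp: in_set_conv_nth)
      have "q - 1 < length A" using qk q3 unfolding k_def by simp
      then have "w (A ! (q - 1)) < w (A ! j)" using A_basic(4) j(1) unfolding sorted_wrt_iff_nth_less by blast
      then show "a < w t" unfolding a_def j(2) .
    qed
    show "card (set (take (q - 1) A)) = q - 1" using A_basic(3) qk unfolding k_def by (simp add: distinct_card)
  qed
  have OS: "q - 1 \<le> length Ol \<and> a < w (Ol ! (q - 1 - 1))"
    unfolding Ol_def by (rule O_strict[OF M dLE sLE inj nn T(1) T(2) T(3)]) (use q3 T(4) in auto)
  have BF: "Bset i - S \<subseteq> set (filter (\<lambda>x. k < q \<or> a < w x) (drop m \<sigma>))"
  proof
    fix y assume y: "y \<in> Bset i - S"
    then obtain j where j: "y = Ol ! j" "j < q - 1" unfolding Bset_def q_def by auto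
    have jK: "j < K" using j x0K by linarith
    have "Wt (q - 2) \<le> Wt j" using Wt_dec[of j "q - 2"] j x0K by simp
    moreover have "a < Wt (q - 2)" using OS unfolding Wt_def Ol_def by (simp add: numeral_2_eq_2)
    ultimately have "a < w y" unfolding j(1) Wt_def by simp
    moreover have "y \<in> set (drop m \<sigma>)" using N y OlE[OF jK] j(1) by simp
    ultimately show "y \<in> set (filter (\<lambda>x. k < q \<or> a < w x) (drop m \<sigma>))" by simp
  qed
  have BI: "indep (Bset i - S)" using m_sub[OF M Ol_facts(3)] BOl by blast
  have gv: "real (card (Bset i - S)) * x0 \<le> sum w (threshold_greedy indep w \<sigma> m q)"
    unfolding tg by (rule go_value[OF M x0nn big BI BF])
  have "(3^i - 1 :: real) / 2 \<le> real (card (Bset i - S))"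
  proof -
    have "real (q - 1) \<le> real (2 * card (Bset i - S))" using cB by (rule of_nat_mono)
    moreover have "real (q - 1) = real q - 1" using q3 by simp
    ultimately show ?thesis unfolding q_def by simp
  qed
  then have "(3^i - 1 :: real) / 2 * x0 \<le> real (card (Bset i - S)) * x0" using x0nn by (rule mult_right_mono)
  then have "val i \<le> sum w (threshold_greedy indep w \<sigma> m q)"
    using gv i cK unfolding val_def x0_def q_def by simp
  then show ?thesis using qk unfolding q_def k_def A_def L_def by simp
qed

end

context SA begin

lemma finE: "finite E" using m_fin[OF M] .

lemma count0: "2 ^ card E \<le> 4 * card {S\<in>Pow E. cond 0 S}"
proof -
  define ob where "ob = Ol ! 0"
  have oE: "ob \<in> E" unfolding ob_def using OlE K1 by simp
  have oOl: "ob \<in> set Ol" unfolding ob_def using K1 unfolding K_def by (intro nth_mem) linarith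
  have io: "indep {ob}" using m_sub[OF M Ol_facts(3)] oOl by simp
  define Y where "Y = {y\<in>E. indep {y} \<and> y \<noteq> ob}"
  have fY: "finite Y" unfolding Y_def using finE by simp
  show ?thesis
  proof (cases "Y = {}")
    case True
    have sub: "{S\<in>Pow E. (\<lambda>T. T = {}) (S \<inter> {ob})} \<subseteq> {S\<in>Pow E. cond 0 S}"
    proof
      fix S assume S: "S \<in> {S\<in>Pow E. (\<lambda>T. T = {}) (S \<inter> {ob})}"
      then have a: "ob \<notin> S" "S \<subseteq> E" by auto
      have "\<forall>y\<in>E. indep {y} \<and> y \<noteq> ob \<longrightarrow> (\<exists>z\<in>S. indep {z} \<and> z \<noteq> ob \<and> w y \<le> w z)"
        using True unfolding Y_def by blast
      then show "S \<in> {S\<in>Pow E. cond 0 S}" using a unfolding cond_def ob_def by simp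
    qed
    have "card {S\<in>Pow E. (\<lambda>T. T = {}) (S \<inter> {ob})} = card {T\<in>Pow {ob}. T = {}} * 2 ^ (card E - card {ob})"
      by (rule count_restrict[OF finE]) (use oE in simp)
    also have "card {T\<in>Pow {ob}. T = {}} = 1"
    proof -
      have "{T\<in>Pow {ob}. T = {}} = {{}}" by auto
      then show ?thesis by simp
    qed
    finally have c1: "card {S\<in>Pow E. (\<lambda>T. T = {}) (S \<inter> {ob})} = 2 ^ (card E - 1)" by simp
    have "card {S\<in>Pow E. (\<lambda>T. T = {}) (S \<inter> {ob})} \<le> card {S\<in>Pow E. cond 0 S}"
      by (rule card_mono[OF _ sub]) (use finE in simp)
    moreover have "card {ob} \<le> card E" using oE finE by (intro card_mono) auto
    then have "card E \<ge> 1" by simp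
    then have "(2::nat) ^ card E = 2 * 2 ^ (card E - 1)" by (cases "card E") auto
    ultimately show ?thesis using c1 by simp
  next
    case False
    obtain s where s: "s \<in> Y" "\<forall>y\<in>Y. w y \<le> w s"
    proof -
      have "Max (w ` Y) \<in> w ` Y" using fY False by simp
      then obtain s where "s \<in> Y" "w s = Max (w ` Y)" by auto
      moreover have "\<forall>y\<in>Y. w y \<le> Max (w ` Y)" using fY by simp
      ultimately show ?thesis using that by auto
    qed
    have sE: "s \<in> E" "indep {s}" "s \<noteq> ob" using s(1) unfolding Y_def by auto
    have sub: "{S\<in>Pow E. (\<lambda>T. T = {s}) (S \<inter> {ob, s})} \<subseteq> {S\<in>Pow E. cond 0 S}"
    proof
      fix S assume S: "S \<in> {S\<in>Pow E. (\<lambda>T. T = {s}) (S \<inter> {ob, s})}"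
      then have a: "ob \<notin> S" "s \<in> S" "S \<subseteq> E" using sE by auto
      have "\<forall>y\<in>E. indep {y} \<and> y \<noteq> ob \<longrightarrow> (\<exists>z\<in>S. indep {z} \<and> z \<noteq> ob \<and> w y \<le> w z)"
        using a sE s(2) unfolding Y_def by blast
      then show "S \<in> {S\<in>Pow E. cond 0 S}" using a unfolding cond_def ob_def by simp
    qed
    have "card {S\<in>Pow E. (\<lambda>T. T = {s}) (S \<inter> {ob, s})} = card {T\<in>Pow {ob, s}. T = {s}} * 2 ^ (card E - card {ob, s})"
      by (rule count_restrict[OF finE]) (use oE sE in simp)
    also have "card {T\<in>Pow {ob, s}. T = {s}} = 1"
    proof -
      have "{T\<in>Pow {ob, s}. T = {s}} = {{s}}" by auto
      then show ?thesis by simp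
    qed
    also have "card {ob, s} = 2" using sE by simp
    finally have c1: "card {S\<in>Pow E. (\<lambda>T. T = {s}) (S \<inter> {ob, s})} = 2 ^ (card E - 2)" by simp
    have "card {S\<in>Pow E. (\<lambda>T. T = {s}) (S \<inter> {ob, s})} \<le> card {S\<in>Pow E. cond 0 S}"
      by (rule card_mono[OF _ sub]) (use finE in simp)
    moreover have "card E \<ge> 2"
    proof -
      have "card {ob, s} \<le> card E" using oE sE finE by (intro card_mono) auto
      then show ?thesis using sE by simp
    qed
    then obtain d where d: "card E = d + 2" by (metis le_add_diff_inverse2)
    then have "(2::nat) ^ card E = 4 * 2 ^ (card E - 2)" by (simp add: power_add)
    ultimately show ?thesis using c1 by simp
  qed
qed

lemma counti:
  assumes i: "1 \<le> i" and cK: "3*3^i - 2 \<le> K"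
  shows "2 ^ card E \<le> 4 * card {S\<in>Pow E. cond i S}"
proof -
  define q :: nat where "q = 3^i"
  have q3: "3 \<le> q" unfolding q_def using power_increasing[OF i, of "3::nat"] by simp
  have cK': "3*q - 2 \<le> K" using cK unfolding q_def .
  define A where "A = Aset i"
  define B where "B = Bset i"
  have injA: "inj_on (\<lambda>j. Ol ! j) {q - 1 ..< 3*q - 2}"
    by (rule inj_on_nth[OF Ol_facts(2)]) (use cK' in \<open>auto simp: K_def\<close>)
  have injB: "inj_on (\<lambda>j. Ol ! j) {..< q - 1}"
    by (rule inj_on_nth[OF Ol_facts(2)]) (use cK' q3 in \<open>auto simp: K_def\<close>)
  have injAB: "inj_on (\<lambda>j. Ol ! j) ({q - 1 ..< 3*q - 2} \<union> {..< q - 1})"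
    by (rule inj_on_nth[OF Ol_facts(2)]) (use cK' q3 in \<open>auto simp: K_def\<close>)
  have cA: "card A = 2*q - 1" unfolding A_def Aset_def q_def[symmetric] using card_image[OF injA] q3 by simp
  have cB: "card B = q - 1" unfolding B_def Bset_def q_def[symmetric] using card_image[OF injB] by simp
  have dis: "A \<inter> B = {}"
  proof -
    have "(\<lambda>j. Ol ! j) ` {q - 1 ..< 3*q - 2} \<inter> (\<lambda>j. Ol ! j) ` {..< q - 1} =
          (\<lambda>j. Ol ! j) ` ({q - 1 ..< 3*q - 2} \<inter> {..< q - 1})"
      by (rule inj_on_image_Int[OF injAB, symmetric]) auto
    then show ?thesis unfolding A_def B_def Aset_def Bset_def q_def[symmetric] by auto
  qed
  have AE: "A \<subseteq> E" unfolding A_def Aset_def q_def[symmetric] using OlE cK' by auto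
  have BE: "B \<subseteq> E" unfolding B_def Bset_def q_def[symmetric] using OlE cK' q3 by auto
  have fA: "finite A" "finite B" unfolding A_def B_def Aset_def Bset_def by auto
  define P where "P U = (q \<le> card U)" for U :: "'a set"
  define Q where "Q V = (q - 1 \<le> 2 * card (B - V))" for V
  define PP where "PP T = (P (T \<inter> A) \<and> Q (T \<inter> B))" for T
  have sub: "{S\<in>Pow E. PP (S \<inter> (A \<union> B))} \<subseteq> {S\<in>Pow E. cond i S}"
  proof
    fix S assume S: "S \<in> {S\<in>Pow E. PP (S \<inter> (A \<union> B))}"
    have e1: "S \<inter> (A \<union> B) \<inter> A = S \<inter> A" by blast
    have e2: "B - S \<inter> (A \<union> B) \<inter> B = B - S" by blast
    have h: "PP (S \<inter> (A \<union> B))" using S by simp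
    then have "P (S \<inter> (A \<union> B) \<inter> A) \<and> Q (S \<inter> (A \<union> B) \<inter> B)" unfolding PP_def .
    then have "P (S \<inter> A) \<and> q - 1 \<le> 2 * card (B - S \<inter> (A \<union> B) \<inter> B)" unfolding e1 Q_def .
    then have "q \<le> card (S \<inter> A)" "q - 1 \<le> 2 * card (B - S)" unfolding e2 P_def by auto
    then show "S \<in> {S\<in>Pow E. cond i S}" using S i cK unfolding cond_def A_def B_def q_def by auto
  qed
  have "card {S\<in>Pow E. PP (S \<inter> (A \<union> B))} = card {T\<in>Pow (A \<union> B). PP T} * 2 ^ (card E - card (A \<union> B))"
    by (rule count_restrict[OF finE]) (use AE BE in auto)
  also have "card {T\<in>Pow (A \<union> B). PP T} = card {U\<in>Pow A. P U} * card {V\<in>Pow B. Q V}"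
    unfolding PP_def by (rule split_count[OF fA dis])
  finally have eq: "card {S\<in>Pow E. PP (S \<inter> (A \<union> B))} = card {U\<in>Pow A. P U} * card {V\<in>Pow B. Q V} * 2 ^ (card E - card (A \<union> B))" .
  have hA: "2 ^ card A \<le> 2 * card {U\<in>Pow A. P U}"
  proof (rule half_count[OF fA(1)])
    fix U assume U: "U \<subseteq> A" "\<not> P U"
    have "card (A - U) = card A - card U" using U(1) fA(1) by (simp add: card_Diff_subset finite_subset)
    then show "P (A - U)" using U(2) cA unfolding P_def by simp
  qed
  have hB: "2 ^ card B \<le> 2 * card {V\<in>Pow B. Q V}"
  proof (rule half_count[OF fA(2)])
    fix V assume V: "V \<subseteq> B" "\<not> Q V"
    have "card (B - V) = card B - card V" using V(1) fA(2) by (simp add: card_Diff_subset finite_subset)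
    moreover have "B - (B - V) = V" using V(1) by blast
    moreover have "card V \<le> card B" using V(1) fA(2) by (simp add: card_mono)
    ultimately show "Q (B - V)" using V(2) cB unfolding Q_def by simp
  qed
  have cAB: "card (A \<union> B) = card A + card B" using card_Un_disjoint[OF fA dis] .
  have cE: "card (A \<union> B) \<le> card E" using AE BE finE by (intro card_mono) auto
  have "(2::nat) ^ card E = 2 ^ card A * 2 ^ card B * 2 ^ (card E - card (A \<union> B))"
    using cAB cE by (simp add: power_add[symmetric])
  also have "\<dots> \<le> (2 * card {U\<in>Pow A. P U}) * (2 * card {V\<in>Pow B. Q V}) * 2 ^ (card E - card (A \<union> B))"
    using hA hB by (intro mult_mono) auto
  also have "\<dots> = 4 * card {S\<in>Pow E. PP (S \<inter> (A \<union> B))}" unfolding eq by simp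
  also have "\<dots> \<le> 4 * card {S\<in>Pow E. cond i S}"
    using card_mono[OF _ sub] finE by simp
  finally show ?thesis .
qed

end

context SA begin

definition "psi i S = (if cond i S then val i else 0)"
definition "Psi S = (\<Sum>i\<le>flog3 K. psi i S)"

lemma psi_nn: "0 \<le> psi i S" unfolding psi_def using val_nn by simp

lemma sumPsi: "(\<Sum>i\<le>flog3 K. val i) * 2 ^ card E \<le> 4 * (\<Sum>S\<in>Pow E. Psi S)"
proof -
  have "(\<Sum>S\<in>Pow E. Psi S) = (\<Sum>i\<le>flog3 K. (\<Sum>S\<in>Pow E. psi i S))"
    unfolding Psi_def by (rule sum.swap)
  also have "\<dots> = (\<Sum>i\<le>flog3 K. val i * real (card {S\<in>Pow E. cond i S}))"
    unfolding psi_def using finE by (intro sum.cong refl sum_if_const) simp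
  finally have e: "(\<Sum>S\<in>Pow E. Psi S) = (\<Sum>i\<le>flog3 K. val i * real (card {S\<in>Pow E. cond i S}))" .
  have each: "val i * 2 ^ card E \<le> 4 * (val i * real (card {S\<in>Pow E. cond i S}))" for i
  proof -
    have "val i = 0 \<or> 2 ^ card E \<le> 4 * card {S\<in>Pow E. cond i S}"
    proof (cases "i = 0")
      case True then show ?thesis using count0 by simp
    next
      case False
      show ?thesis
      proof (cases "3*3^i - 2 \<le> K")
        case True then show ?thesis using counti[of i] False by simp
      next
        case c: False then show ?thesis using False unfolding val_def by simp
      qed
    qed
    then show ?thesis
    proof
      assume h: "2 ^ card E \<le> 4 * card {S\<in>Pow E. cond i S}"
      have "real (2 ^ card E) \<le> real (4 * card {S\<in>Pow E. cond i S})" using h by (rule of_nat_mono)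
      then have "(2::real) ^ card E \<le> 4 * real (card {S\<in>Pow E. cond i S})" by simp
      then show ?thesis using val_nn[of i] by (metis mult.left_commute mult_left_mono)
    qed simp
  qed
  have "(\<Sum>i\<le>flog3 K. val i) * 2 ^ card E = (\<Sum>i\<le>flog3 K. val i * 2 ^ card E)" by (rule sum_distrib_right)
  also have "\<dots> \<le> (\<Sum>i\<le>flog3 K. 4 * (val i * real (card {S\<in>Pow E. cond i S})))" by (rule sum_mono) (rule each)
  also have "\<dots> = 4 * (\<Sum>S\<in>Pow E. Psi S)" unfolding e by (simp add: sum_distrib_left)
  finally show ?thesis .
qed

lemma OPTbound: "opt_weight E indep w \<le> 18 * (\<Sum>i\<le>flog3 K. val i)"
proof -
  have "opt_weight E indep w \<le> (\<Sum>j<K. Wt j)"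
    using O_opt[OF M dLE sLE inj nn] Ol_facts(5) unfolding Wt_def Ol_def by simp
  also have "\<dots> \<le> (\<Sum>i\<le>flog3 K. (if 3^(i+1) - 3 < K then 6 * 3^i * Wt (3^(i+1) - 3) else 0))"
    by (rule bucket[OF K1]) (use Wt_nn Wt_dec in auto)
  also have "\<dots> \<le> (\<Sum>i\<le>flog3 K. 18 * val i)"
  proof (rule sum_mono)
    fix i
    show "(if 3^(i+1) - 3 < K then 6 * 3^i * Wt (3^(i+1) - 3) else 0) \<le> 18 * val i"
    proof (cases "i = 0")
      case True
      then show ?thesis using Wt_nn[of 0] K1 unfolding val_def by simp
    next
      case False
      show ?thesis
      proof (cases "3^(i+1) - 3 < K")
        case True
        then have c: "3*3^i - 2 \<le> K" by simp
        have w: "0 \<le> Wt (3*3^i - 3)" using True Wt_nn by simp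
        have "(3::real) \<le> 3^i" using False by (metis One_nat_def Suc_leI not_gr0 power_increasing power_one_right numeral_le_iff semiring_norm(68) le_numeral_extra(4) of_nat_numeral zero_less_numeral one_le_numeral)
        then have "6 * 3^i \<le> 18 * ((3^i - 1 :: real) / 2)" by simp
        then have ineq: "6 * 3^i * Wt (3*3^i - 3) \<le> 18 * ((3^i - 1 :: real) / 2) * Wt (3*3^i - 3)"
          using w by (rule mult_right_mono)
        have e0: "(3::nat)^(i+1) - 3 = 3*3^i - 3" by simp
        have e1: "(if 3^(i+1) - 3 < K then 6 * 3^i * Wt (3^(i+1) - 3) else 0) = 6 * 3^i * Wt (3*3^i - 3)"
          using True unfolding e0 by simp
        have e2: "val i = (3^i - 1 :: real) / 2 * Wt (3*3^i - 3)" using c \<open>i \<noteq> 0\<close> unfolding val_def by simp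
        show ?thesis unfolding e1 e2 using ineq by (simp only: mult.assoc)
      next
        case False
        then show ?thesis using val_nn[of i] by simp
      qed
    qed
  qed
  also have "\<dots> = 18 * (\<Sum>i\<le>flog3 K. val i)" by (simp add: sum_distrib_left)
  finally show ?thesis .
qed

end

context SA begin

definition "gE S = sum w (S \<inter> E)"

lemma gE_nn: "0 \<le> gE S" unfolding gE_def using nn by (intro sum_nonneg) auto

lemma gE_bnd: "\<bar>gE S\<bar> \<le> sum w E"
proof -
  have "gE S \<le> sum w E" unfolding gE_def using nn finE by (intro sum_mono2) auto
  then show ?thesis using gE_nn[of S] by simp
qed

lemma gE_eq: "S \<subseteq> E \<Longrightarrow> gE S = sum w S"
  unfolding gE_def by (simp add: Int_absorb2)

lemma k_le:
  assumes \<sigma>: "\<sigma> \<in> permutations_of_set E"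
  shows "length (sample_mwis indep w (take m \<sigma>)) \<le> K"
proof -
  define A where "A = sample_mwis indep w (take m \<sigma>)"
  note pf = perm_facts[OF \<sigma>, of m]
  have A: "set A \<subseteq> set (take m \<sigma>)" "indep (set A)" "distinct A"
    using smw_basic[OF M pf(1) pf(3)] unfolding A_def by auto
  show ?thesis
  proof (cases "length A = 0")
    case False
    have "card (set A) = length A" using A(3) by (rule distinct_card)
    moreover have "set A \<subseteq> set LE" using A(1) pf(2) sLE by auto
    ultimately have "length A \<le> length (sample_mwis indep w LE) \<and> True"
      using smw_P1[OF M dLE injL[OF M dLE sLE inj nn], of "\<lambda>_. True" "set A" "length A"] A(2) False by simp
    then show ?thesis unfolding A_def K_def Ol_def by simp
  qed (simp add: A_def)
qed

lemma Vpsi: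
  assumes \<sigma>: "\<sigma> \<in> permutations_of_set E"
  shows "psi i (set (take m \<sigma>)) \<le> gE (threshold_greedy indep w \<sigma> m (3^i))"
proof (cases "cond i (set (take m \<sigma>))")
  case True
  note ci = True
  have e: "gE (threshold_greedy indep w \<sigma> m (3^i)) = sum w (threshold_greedy indep w \<sigma> m (3^i))"
    using tg_sub[OF \<sigma>] by (rule gE_eq)
  show ?thesis
  proof (cases "i = 0")
    case True
    then show ?thesis using PW0[OF \<sigma>] ci e unfolding psi_def val_def by simp
  next
    case False
    then show ?thesis using PWi[OF \<sigma> ci] e ci unfolding psi_def by simp
  qed
next
  case False
  then show ?thesis using gE_nn unfolding psi_def by simp
qed

lemma cond_le:
  assumes \<sigma>: "\<sigma> \<in> permutations_of_set E" and c: "cond i (set (take m \<sigma>))"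
  shows "i \<le> flog3 (length (sample_mwis indep w (take m \<sigma>)))"
proof (cases "i = 0")
  case False
  then have "3^i \<le> length (sample_mwis indep w (take m \<sigma>))" using PWi[OF \<sigma> c] by simp
  then show ?thesis by (rule flog3_ge)
qed simp

lemma exp_inner:
  "measure_pmf.expectation (bind_pmf (pmf_of_set {0..t}) (\<lambda>i. return_pmf (threshold_greedy indep w \<sigma> m (3 ^ i)))) gE
   = (\<Sum>i\<in>{0..t}. gE (threshold_greedy indep w \<sigma> m (3 ^ i))) / real (t + 1)"
proof -
  have "measure_pmf.expectation (bind_pmf (pmf_of_set {0..t}) (\<lambda>i. return_pmf (threshold_greedy indep w \<sigma> m (3 ^ i)))) gE
      = measure_pmf.expectation (pmf_of_set {0..t}) (\<lambda>i. measure_pmf.expectation (return_pmf (threshold_greedy indep w \<sigma> m (3 ^ i))) gE)"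
    by (rule exp_bind[OF gE_bnd])
  also have "\<dots> = measure_pmf.expectation (pmf_of_set {0..t}) (\<lambda>i. gE (threshold_greedy indep w \<sigma> m (3 ^ i)))"
    by (simp only: exp_return)
  also have "\<dots> = (\<Sum>i\<in>{0..t}. gE (threshold_greedy indep w \<sigma> m (3 ^ i))) / real (card {0..t})"
    by (rule exp_set) auto
  finally show ?thesis by simp
qed

lemma inner:
  assumes \<sigma>: "\<sigma> \<in> permutations_of_set E"
  shows "Psi (set (take m \<sigma>)) / (real (flog3 K) + 2) \<le> measure_pmf.expectation
     (bind_pmf (if known then return_pmf (flog3 (mrank E indep))
                else pmf_of_set {flog3 (length (sample_mwis indep w (take m \<sigma>))), flog3 (length (sample_mwis indep w (take m \<sigma>))) + 1})
       (\<lambda>t. bind_pmf (pmf_of_set {0..t}) (\<lambda>i. return_pmf (threshold_greedy indep w \<sigma> m (3 ^ i))))) gE"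
proof -
  define F where "F = flog3 K"
  define S where "S = set (take m \<sigma>)"
  define t1 where "t1 = flog3 (length (sample_mwis indep w (take m \<sigma>)))"
  define V where "V i = gE (threshold_greedy indep w \<sigma> m (3 ^ i))" for i
  define h where "h t = (\<Sum>i\<in>{0..t}. V i) / real (t + 1)" for t
  have Vnn: "0 \<le> V i" for i unfolding V_def by (rule gE_nn)
  have pV: "psi i S \<le> V i" for i unfolding S_def V_def by (rule Vpsi[OF \<sigma>])
  have t1F: "t1 \<le> F" unfolding t1_def F_def by (rule flog3_mono[OF k_le[OF \<sigma>]])
  have top: "measure_pmf.expectation
     (bind_pmf (if known then return_pmf (flog3 (mrank E indep)) else pmf_of_set {t1, t1 + 1})
       (\<lambda>t. bind_pmf (pmf_of_set {0..t}) (\<lambda>i. return_pmf (threshold_greedy indep w \<sigma> m (3 ^ i))))) gE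
     = measure_pmf.expectation (if known then return_pmf (flog3 (mrank E indep)) else pmf_of_set {t1, t1 + 1}) h"
    unfolding h_def V_def by (subst exp_bind[OF gE_bnd]) (simp only: exp_inner)
  have sV: "(\<Sum>i\<le>F. psi i S) \<le> (\<Sum>i\<le>t1. V i) \<and> 0 \<le> (\<Sum>i\<le>t1. V i)"
  proof
    have "(\<Sum>i\<le>F. psi i S) = (\<Sum>i\<le>t1. psi i S)"
    proof (rule sum.mono_neutral_right)
      show "\<forall>i\<in>{..F} - {..t1}. psi i S = 0"
      proof
        fix i assume i: "i \<in> {..F} - {..t1}"
        have "\<not> cond i S"
        proof
          assume "cond i S"
          then have "i \<le> t1" unfolding t1_def S_def by (rule cond_le[OF \<sigma>])
          then show False using i by simp
        qed
        then show "psi i S = 0" unfolding psi_def by simp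
      qed
    qed (use t1F in auto)
    also have "\<dots> \<le> (\<Sum>i\<le>t1. V i)" by (rule sum_mono) (rule pV)
    finally show "(\<Sum>i\<le>F. psi i S) \<le> (\<Sum>i\<le>t1. V i)" .
    show "0 \<le> (\<Sum>i\<le>t1. V i)" by (rule sum_nonneg) (rule Vnn)
  qed
  have PsiS: "Psi S = (\<Sum>i\<le>F. psi i S)" unfolding Psi_def F_def ..
  have goal: "Psi S / (real F + 2) \<le> measure_pmf.expectation (if known then return_pmf (flog3 (mrank E indep)) else pmf_of_set {t1, t1 + 1}) h"
  proof (cases known)
    case True
    have "measure_pmf.expectation (if known then return_pmf (flog3 (mrank E indep)) else pmf_of_set {t1, t1 + 1}) h = h F"
      using True Ol_facts(5) unfolding F_def by (simp add: exp_return)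
    moreover have "Psi S / (real F + 2) \<le> h F"
    proof -
      have "Psi S \<le> (\<Sum>i\<le>F. V i)" unfolding PsiS by (rule sum_mono) (rule pV)
      moreover have "0 \<le> Psi S" unfolding PsiS by (rule sum_nonneg) (rule psi_nn)
      ultimately have "Psi S / (real F + 2) \<le> (\<Sum>i\<le>F. V i) / (real F + 2)" by (simp add: divide_right_mono)
      also have "\<dots> \<le> (\<Sum>i\<le>F. V i) / (real F + 1)"
        by (rule divide_left_mono) (use Vnn in \<open>auto intro: sum_nonneg\<close>)
      also have "\<dots> = h F" unfolding h_def by (simp add: atLeast0AtMost add.commute)
      finally show ?thesis .
    qed
    ultimately show ?thesis by simp
  next
    case False
    define s where "s = (\<Sum>i\<le>t1. V i)"
    have "measure_pmf.expectation (if known then return_pmf (flog3 (mrank E indep)) else pmf_of_set {t1, t1 + 1}) h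
        = (h t1 + h (t1 + 1)) / 2"
    proof -
      have "measure_pmf.expectation (if known then return_pmf (flog3 (mrank E indep)) else pmf_of_set {t1, t1 + 1}) h
          = measure_pmf.expectation (pmf_of_set {t1, t1 + 1}) h" using False by simp
      also have "\<dots> = sum h {t1, t1 + 1} / real (card {t1, t1 + 1})" by (rule exp_set) auto
      also have "\<dots> = (h t1 + h (t1 + 1)) / 2" by simp
      finally show ?thesis .
    qed
    moreover have "s / (real F + 2) \<le> h t1"
    proof -
      have "s / (real F + 2) \<le> s / (real t1 + 1)"
        by (rule divide_left_mono) (use sV t1F in \<open>auto simp: s_def\<close>)
      also have "\<dots> = h t1" unfolding h_def s_def by (simp add: atLeast0AtMost add.commute)
      finally show ?thesis .
    qed
    moreover have "s / (real F + 2) \<le> h (t1 + 1)"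
    proof -
      have "s / (real F + 2) \<le> s / (real t1 + 2)"
        by (rule divide_left_mono) (use sV t1F in \<open>auto simp: s_def\<close>)
      also have "\<dots> \<le> (\<Sum>i\<le>t1 + 1. V i) / (real t1 + 2)"
        unfolding s_def using Vnn[of "t1 + 1"] by (intro divide_right_mono) auto
      also have "\<dots> = h (t1 + 1)" unfolding h_def by (simp add: atLeast0AtMost add.commute)
      finally show ?thesis .
    qed
    moreover have "Psi S / (real F + 2) \<le> s / (real F + 2)"
      using sV unfolding PsiS s_def by (intro divide_right_mono) auto
    ultimately show ?thesis by simp
  qed
  show ?thesis using goal top unfolding S_def t1_def F_def by simp
qed

end

lemma bind_sub: "(\<And>x. x \<in> set_pmf p \<Longrightarrow> set_pmf (f x) \<subseteq> X) \<Longrightarrow> set_pmf (bind_pmf p f) \<subseteq> X"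
  by (auto simp: set_bind_pmf)

lemma lvl_binom:
  assumes bnd: "\<And>S. \<bar>g S\<bar> \<le> B"
  shows "measure_pmf.expectation (bind_pmf (binomial_pmf n (1/2)) Xm) (g :: 'a \<Rightarrow> real)
     = (\<Sum>m\<le>n. real (n choose m) * measure_pmf.expectation (Xm m) g) / 2 ^ n"
  by (subst exp_bind[OF bnd]) (rule exp_binom)

lemma lvl_bern:
  assumes bnd: "\<And>S. \<bar>g S\<bar> \<le> B"
  shows "measure_pmf.expectation (bind_pmf (bernoulli_pmf (1/2)) (\<lambda>b. if b then return_pmf c else Y)) (g :: 'a \<Rightarrow> real)
     = (g c + measure_pmf.expectation Y g) / 2"
  by (subst exp_bind[OF bnd]) (simp add: exp_return)

lemma lvl_top:
  assumes bnd: "\<And>S. \<bar>g S\<bar> \<le> B" and "finite P" "P \<noteq> {}"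
  shows "measure_pmf.expectation (bind_pmf (pmf_of_set P) G) (g :: 'a \<Rightarrow> real)
     = (\<Sum>\<sigma>\<in>P. measure_pmf.expectation (G \<sigma>) g) / real (card P)"
  by (subst exp_bind[OF bnd]) (rule exp_set[OF assms(2,3)])

context SA begin

lemma cls_indep: "indep (classical_secretary indep w \<sigma>)"
  unfolding classical_secretary_def Let_def using m_empty[OF M] by (auto split: option.split)

lemma tg_indep: "indep (threshold_greedy indep w \<sigma> m l)"
  unfolding threshold_greedy_def Let_def by (rule go_indep[of indep "{}", OF m_empty[OF M]])

lemma support: "set_pmf (secretary_alg known E indep w) \<subseteq> {S. indep S}"
  unfolding secretary_alg_def Let_def
  apply (rule bind_sub)+
  subgoal for \<sigma> b
    apply (cases b)
     apply (simp add: cls_indep)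
    apply (simp only: if_False)
    apply (rule bind_sub)+
    apply (simp add: tg_indep)
    done
  done

lemma main:
  "opt_weight E indep w \<le> 144 * (real (flog3 K) + 2) * measure_pmf.expectation (secretary_alg known E indep w) (\<lambda>S. sum w S)"
proof -
  define n where "n = card E"
  define P where "P = permutations_of_set E"
  define F where "F = flog3 K"
  define eX where "eX \<sigma> m = measure_pmf.expectation
     (bind_pmf (if known then return_pmf (flog3 (mrank E indep))
                else pmf_of_set {flog3 (length (sample_mwis indep w (take m \<sigma>))), flog3 (length (sample_mwis indep w (take m \<sigma>))) + 1})
       (\<lambda>t. bind_pmf (pmf_of_set {0..t}) (\<lambda>i. return_pmf (threshold_greedy indep w \<sigma> m (3 ^ i))))) gE" for \<sigma> m
  have fP: "finite P" "P \<noteq> {}" unfolding P_def using finE by auto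
  have cP: "real (card P) = fact n" unfolding P_def n_def using finE by simp
  have eq1: "measure_pmf.expectation (secretary_alg known E indep w) (\<lambda>S. sum w S)
      = measure_pmf.expectation (secretary_alg known E indep w) gE"
  proof (rule integral_cong_AE)
    show "AE x in measure_pmf (secretary_alg known E indep w). sum w x = gE x"
    proof (subst AE_measure_pmf_iff, intro ballI)
      fix S assume "S \<in> set_pmf (secretary_alg known E indep w)"
      then have "indep S" using support by blast
      then show "sum w S = gE S" using gE_eq m_subE[OF M] by metis
    qed
  qed simp_all
  have eq2: "measure_pmf.expectation (secretary_alg known E indep w) gE
     = (\<Sum>\<sigma>\<in>P. (gE (classical_secretary indep w \<sigma>) + (\<Sum>m\<le>n. real (n choose m) * eX \<sigma> m) / 2 ^ n) / 2) / real (card P)"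
    unfolding secretary_alg_def Let_def eX_def P_def n_def
    by (simp only: lvl_top[OF gE_bnd fP[unfolded P_def]] lvl_bern[OF gE_bnd] lvl_binom[OF gE_bnd])
  have lb: "(\<Sum>m\<le>n. real (n choose m) * Psi (set (take m \<sigma>))) / (real F + 2) / 2 ^ n / 2
     \<le> (gE (classical_secretary indep w \<sigma>) + (\<Sum>m\<le>n. real (n choose m) * eX \<sigma> m) / 2 ^ n) / 2"
    if \<sigma>: "\<sigma> \<in> P" for \<sigma>
  proof -
    have "(\<Sum>m\<le>n. real (n choose m) * Psi (set (take m \<sigma>))) / (real F + 2)
        = (\<Sum>m\<le>n. real (n choose m) * (Psi (set (take m \<sigma>)) / (real F + 2)))"
      by (simp add: sum_divide_distrib)
    also have "\<dots> \<le> (\<Sum>m\<le>n. real (n choose m) * eX \<sigma> m)"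
    proof (rule sum_mono)
      fix m
      have "Psi (set (take m \<sigma>)) / (real F + 2) \<le> eX \<sigma> m"
        unfolding eX_def F_def by (rule inner) (use \<sigma> P_def in simp)
      then show "real (n choose m) * (Psi (set (take m \<sigma>)) / (real F + 2)) \<le> real (n choose m) * eX \<sigma> m"
        by (rule mult_left_mono) simp
    qed
    finally have a: "(\<Sum>m\<le>n. real (n choose m) * Psi (set (take m \<sigma>))) / (real F + 2) / 2 ^ n
        \<le> (\<Sum>m\<le>n. real (n choose m) * eX \<sigma> m) / 2 ^ n" by (rule divide_right_mono) simp
    have "0 \<le> gE (classical_secretary indep w \<sigma>)" by (rule gE_nn)
    then show ?thesis using a by simp
  qed
  have "(\<Sum>S\<in>Pow E. Psi S) / (real F + 2) / 2 ^ n / 2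
      = (\<Sum>\<sigma>\<in>P. (\<Sum>m\<le>n. real (n choose m) * Psi (set (take m \<sigma>))) / (real F + 2) / 2 ^ n / 2) / real (card P)"
  proof -
    have "(\<Sum>\<sigma>\<in>P. (\<Sum>m\<le>n. real (n choose m) * Psi (set (take m \<sigma>))))
        = (\<Sum>m\<le>n. real (n choose m) * (\<Sum>\<sigma>\<in>P. Psi (set (take m \<sigma>))))"
      by (simp add: sum.swap[of _ P] sum_distrib_left)
    also have "\<dots> = fact n * (\<Sum>S\<in>Pow E. Psi S)" unfolding P_def n_def by (rule perm_average[OF finE])
    finally have e: "(\<Sum>\<sigma>\<in>P. (\<Sum>m\<le>n. real (n choose m) * Psi (set (take m \<sigma>)))) = fact n * (\<Sum>S\<in>Pow E. Psi S)" .
    have "(\<Sum>\<sigma>\<in>P. (\<Sum>m\<le>n. real (n choose m) * Psi (set (take m \<sigma>))) / (real F + 2) / 2 ^ n / 2)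
        = (\<Sum>\<sigma>\<in>P. (\<Sum>m\<le>n. real (n choose m) * Psi (set (take m \<sigma>)))) / (real F + 2) / 2 ^ n / 2"
      by (simp add: sum_divide_distrib)
    also have "\<dots> = fact n * (\<Sum>S\<in>Pow E. Psi S) / (real F + 2) / 2 ^ n / 2" unfolding e ..
    finally show ?thesis unfolding cP by simp
  qed
  also have "\<dots> \<le> (\<Sum>\<sigma>\<in>P. (gE (classical_secretary indep w \<sigma>) + (\<Sum>m\<le>n. real (n choose m) * eX \<sigma> m) / 2 ^ n) / 2) / real (card P)"
    by (rule divide_right_mono, rule sum_mono, rule lb) simp_all
  also have "\<dots> = measure_pmf.expectation (secretary_alg known E indep w) (\<lambda>S. sum w S)" using eq1 eq2 by simp
  finally have low: "(\<Sum>S\<in>Pow E. Psi S) / (real F + 2) / 2 ^ n / 2 \<le> measure_pmf.expectation (secretary_alg known E indep w) (\<lambda>S. sum w S)" .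
  define Ex where "Ex = measure_pmf.expectation (secretary_alg known E indep w) (\<lambda>S. sum w S)"
  have F2: "0 < real F + 2" by simp
  have D: "0 < (real F + 2) * 2 ^ n * 2" by simp
  have "(\<Sum>S\<in>Pow E. Psi S) / ((real F + 2) * 2 ^ n * 2) \<le> Ex"
    using low unfolding Ex_def divide_divide_eq_left .
  then have "(\<Sum>S\<in>Pow E. Psi S) \<le> Ex * ((real F + 2) * 2 ^ n * 2)"
    by (simp only: pos_divide_le_eq[OF D])
  then have low2: "(\<Sum>S\<in>Pow E. Psi S) \<le> 2 * 2 ^ n * (real F + 2) * Ex"
    by (simp only: mult_ac)
  have sp: "(\<Sum>i\<le>F. val i) * 2 ^ n \<le> 4 * (\<Sum>S\<in>Pow E. Psi S)" using sumPsi unfolding F_def n_def .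
  have "(\<Sum>i\<le>F. val i) * 2 ^ n \<le> 4 * (2 * 2 ^ n * (real F + 2) * Ex)" using sp low2 by linarith
  also have "\<dots> = (8 * (real F + 2) * Ex) * 2 ^ n" by (simp only: mult_ac)
  finally have "(\<Sum>i\<le>F. val i) * 2 ^ n \<le> (8 * (real F + 2) * Ex) * 2 ^ n" .
  then have sv: "(\<Sum>i\<le>F. val i) \<le> 8 * (real F + 2) * Ex" by (rule mult_right_le_imp_le) simp
  have "opt_weight E indep w \<le> 18 * (\<Sum>i\<le>F. val i)" using OPTbound unfolding F_def .
  also have "\<dots> \<le> 18 * (8 * (real F + 2) * Ex)" using sv by simp
  also have "\<dots> = 144 * (real F + 2) * Ex" by simp
  finally show ?thesis unfolding Ex_def F_def .
qed

end

lemma (in SA) exp_nn: "0 \<le> measure_pmf.expectation (secretary_alg known E indep w) (\<lambda>S. sum w S)"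
proof (rule integral_nonneg_AE)
  show "AE x in measure_pmf (secretary_alg known E indep w). 0 \<le> sum w x"
  proof (subst AE_measure_pmf_iff, intro ballI)
    fix S assume "S \<in> set_pmf (secretary_alg known E indep w)"
    then have "indep S" using support by blast
    then have "S \<subseteq> E" using m_subE[OF M] by blast
    then show "0 \<le> sum w S" using nn by (intro sum_nonneg) auto
  qed
qed

theorem theorem12:
  shows "\<exists>c::real. \<forall>(known::bool) (E::nat set) indep (w::nat \<Rightarrow> real).
     matroid E indep \<and> mrank E indep \<ge> 1 \<and>
     (\<forall>x\<in>E. 0 \<le> w x) \<and> inj_on w E \<longrightarrow>
     c * (1 + ln (real (mrank E indep))) *
       measure_pmf.expectation (secretary_alg known E indep w) (\<lambda>S. sum w S)
     \<ge> opt_weight E indep w"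
proof (intro exI[of _ 288] allI impI)
  fix known :: bool and E :: "nat set" and indep and w :: "nat \<Rightarrow> real"
  assume a: "matroid E indep \<and> mrank E indep \<ge> 1 \<and> (\<forall>x\<in>E. 0 \<le> w x) \<and> inj_on w E"
  then have M: "matroid E indep" and r1: "1 \<le> mrank E indep" and nn: "\<forall>x\<in>E. 0 \<le> w x" and inj: "inj_on w E"
    by auto
  obtain LE where LE: "distinct LE" "set LE = E" using finite_distinct_list[OF m_fin[OF M]] by metis
  interpret SA E indep w LE by unfold_locales (use M LE inj nn r1 in auto)
  define Ex where "Ex = measure_pmf.expectation (secretary_alg known E indep w) (\<lambda>S. sum w S)"
  define r where "r = mrank E indep"
  have Ex0: "0 \<le> Ex" unfolding Ex_def by (rule exp_nn)
  have Kr: "K = r" unfolding r_def using Ol_facts(5) .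
  have "opt_weight E indep w \<le> 144 * (real (flog3 K) + 2) * Ex" unfolding Ex_def by (rule main)
  also have "\<dots> \<le> 288 * (1 + ln (real r)) * Ex"
  proof (rule mult_right_mono[OF _ Ex0])
    have "real (flog3 r) \<le> ln (real r)" using r1 unfolding r_def by (intro flog3_ln) simp
    moreover have "0 \<le> ln (real r)" using r1 unfolding r_def by simp
    moreover have "144 * (real (flog3 r) + 2) = 144 * real (flog3 r) + 288" by simp
    moreover have "288 * (1 + ln (real r)) = 288 + 288 * ln (real r)" by simp
    ultimately show "144 * (real (flog3 K) + 2) \<le> 288 * (1 + ln (real r))" unfolding Kr by linarith
  qed
  finally show "288 * (1 + ln (real (mrank E indep))) * measure_pmf.expectation (secretary_alg known E indep w) (\<lambda>S. sum w S)
     \<ge> opt_weight E indep w" unfolding Ex_def r_def by simp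
qed

end
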